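(* If a $2$-regular curve $\gamma$ in $\mathbb{E}^4$ admits a generalized Bishop frame of type F, then it admits generalized Bishop frames of each of the types B, C and D. In particular, if $\gamma$ admits the Frenet frame, then it admits frames of all the types B, C and D.
   Context: A regular curve $\gamma: I\to\mathbb{E}^4$ ($I$ an open interval) is considered with arc-length parametrization; $\mathbb{T}=\gamma'$ is its unit tangent vector, and $\gamma$ is $2$-regular if $\mathbb{T}'$ is nowhere vanishing. A frame on $\gamma$ is an ordered orthonormal frame $(\mathbb{T},\mathbb{Z}_1,\mathbb{Z}_2,\mathbb{Z}_3)$ of smooth vector fields along $\gamma$ whose first vector is $\mathbb{T}$; it is identified with the smooth map $\mathbb{Z}: I\to O(4)$ whose rows are these vectors. Its coefficient matrix is the $\mathfrak{o}(4)$-valued function $X$ with $\mathbb{Z}'=X\mathbb{Z}$. A frame is of type B, C, D, F respectively if, after possibly permuting $\mathbb{Z}_1,\mathbb{Z}_2,\mathbb{Z}_3$ (keeping $\mathbb{T}$ first), its coefficient matrix has the respective form, for some smooth functions $x_1,x_2,x_3$ (no sign conditions): Type B: $\begin{pmatrix}0&x_1&x_2&x_3\\-x_1&0&0&0\\-x_2&0&0&0\\-x_3&0&0&0\end{pmatrix}$; Type C: $\begin{pmatrix}0&x_1&x_2&0\\-x_1&0&0&x_3\\-x_2&0&0&0\\0&-x_3&0&0\end{pmatrix}$; Type D: $\begin{pmatrix}0&x_1&0&0\\-x_1&0&x_2&x_3\\0&-x_2&0&0\\0&-x_3&0&0\end{pmatrix}$; Type F: $\begin{pmatrix}0&x_1&0&0\\-x_1&0&x_2&0\\0&-x_2&0&x_3\\0&0&-x_3&0\end{pmatrix}$.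 The Frenet frame is a frame whose coefficient matrix (without permutation) has the type F form with $x_1$ and $x_2$ positive functions. *)

theory Defs
  imports "HOL-Analysis.Analysis"
begin

text \<open>Vectors of E^4 are elements of real^4; a frame is a matrix-valued map whose
rows (indexed 1,2,3,4 of type 4; note 4 = 0 in type 4) are T, Z1, Z2, Z3.\<close>

fun vderiv_n :: "nat \<Rightarrow> (real \<Rightarrow> 'a::real_normed_vector) \<Rightarrow> real \<Rightarrow> 'a" where
  "vderiv_n 0 f = f"
| "vderiv_n (Suc n) f = (\<lambda>t. vector_derivative (vderiv_n n f) (at t))"

definition smooth_on :: "real set \<Rightarrow> (real \<Rightarrow> 'a::real_normed_vector) \<Rightarrow> bool" where
  "smooth_on S f \<longleftrightarrow>
     (\<forall>n. \<forall>t\<in>S. (vderiv_n n f has_vector_derivative vderiv_n (Suc n) f t) (at t))"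

definition open_interval :: "real set \<Rightarrow> bool" where
  "open_interval I \<longleftrightarrow> I \<noteq> {} \<and> is_interval I \<and> open I"

definition unit_speed_curve :: "real set \<Rightarrow> (real \<Rightarrow> real^4) \<Rightarrow> bool" where
  "unit_speed_curve I \<gamma> \<longleftrightarrow> open_interval I \<and> smooth_on I \<gamma> \<and>
     (\<forall>t\<in>I. norm (vector_derivative \<gamma> (at t)) = 1)"

definition two_regular :: "real set \<Rightarrow> (real \<Rightarrow> real^4) \<Rightarrow> bool" where
  "two_regular I \<gamma> \<longleftrightarrow> (\<forall>t\<in>I. vderiv_n 2 \<gamma> t \<noteq> 0)"

definition is_frame :: "real set \<Rightarrow> (real \<Rightarrow> real^4) \<Rightarrow> (real \<Rightarrow> real^4^4) \<Rightarrow> bool" where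
  "is_frame I \<gamma> Z \<longleftrightarrow> smooth_on I Z \<and>
     (\<forall>t\<in>I. orthogonal_matrix (Z t) \<and> Z t $ 1 = vector_derivative \<gamma> (at t))"

text \<open>Coefficient matrix X with Z' = X Z, i.e. X = Z' Z^T.\<close>
definition coeff_matrix :: "(real \<Rightarrow> real^4^4) \<Rightarrow> real \<Rightarrow> real^4^4" where
  "coeff_matrix Z t = vector_derivative Z (at t) ** transpose (Z t)"

definition skew4 :: "real \<Rightarrow> real \<Rightarrow> real \<Rightarrow> real \<Rightarrow> real \<Rightarrow> real \<Rightarrow> real^4^4" where
  "skew4 a12 a13 a14 a23 a24 a34 = (\<chi> i j.
     if i = 1 \<and> j = 2 then a12 else if i = 2 \<and> j = 1 then - a12 else
     if i = 1 \<and> j = 3 then a13 else if i = 3 \<and> j = 1 then - a13 else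
     if i = 1 \<and> j = 4 then a14 else if i = 4 \<and> j = 1 then - a14 else
     if i = 2 \<and> j = 3 then a23 else if i = 3 \<and> j = 2 then - a23 else
     if i = 2 \<and> j = 4 then a24 else if i = 4 \<and> j = 2 then - a24 else
     if i = 3 \<and> j = 4 then a34 else if i = 4 \<and> j = 3 then - a34 else 0)"

datatype frame_type = TypeB | TypeC | TypeD | TypeF

fun type_form :: "frame_type \<Rightarrow> real \<Rightarrow> real \<Rightarrow> real \<Rightarrow> real^4^4" where
  "type_form TypeB x1 x2 x3 = skew4 x1 x2 x3 0 0 0"
| "type_form TypeC x1 x2 x3 = skew4 x1 x2 0 0 x3 0"
| "type_form TypeD x1 x2 x3 = skew4 x1 0 0 x2 x3 0"
| "type_form TypeF x1 x2 x3 = skew4 x1 0 0 x2 0 x3"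

definition frame_of_type :: "frame_type \<Rightarrow> real set \<Rightarrow> (real \<Rightarrow> real^4) \<Rightarrow> (real \<Rightarrow> real^4^4) \<Rightarrow> bool" where
  "frame_of_type ty I \<gamma> Z \<longleftrightarrow> is_frame I \<gamma> Z \<and>
     (\<exists>p x1 x2 x3. p permutes (UNIV :: 4 set) \<and> p 1 = 1 \<and>
        smooth_on I x1 \<and> smooth_on I x2 \<and> smooth_on I x3 \<and>
        (\<forall>t\<in>I. coeff_matrix (\<lambda>s. \<chi> i. Z s $ p i) t = type_form ty (x1 t) (x2 t) (x3 t)))"

definition admits_frame_of_type :: "frame_type \<Rightarrow> real set \<Rightarrow> (real \<Rightarrow> real^4) \<Rightarrow> bool" where
  "admits_frame_of_type ty I \<gamma> \<longleftrightarrow> (\<exists>Z. frame_of_type ty I \<gamma> Z)"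

definition is_frenet_frame :: "real set \<Rightarrow> (real \<Rightarrow> real^4) \<Rightarrow> (real \<Rightarrow> real^4^4) \<Rightarrow> bool" where
  "is_frenet_frame I \<gamma> Z \<longleftrightarrow> is_frame I \<gamma> Z \<and>
     (\<exists>x1 x2 x3. smooth_on I x1 \<and> smooth_on I x2 \<and> smooth_on I x3 \<and>
        (\<forall>t\<in>I. x1 t > 0 \<and> x2 t > 0 \<and>
           coeff_matrix Z t = type_form TypeF (x1 t) (x2 t) (x3 t)))"

definition admits_frenet_frame :: "real set \<Rightarrow> (real \<Rightarrow> real^4) \<Rightarrow> bool" where
  "admits_frenet_frame I \<gamma> \<longleftrightarrow> (\<exists>Z. is_frenet_frame I \<gamma> Z)"

end

theory Submission
  imports Defs
begin

lemma matrix_add_rdistrib': "((A::real^'n^'m) + B) ** C = A ** C + B ** C"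
  by (vector matrix_matrix_mult_def sum.distrib[symmetric] field_simps)

lemma bilinear_matrix_mult: "bilinear (\<lambda>(A::real^'n^'m) (B::real^'p^'n). A ** B)"
  unfolding bilinear_def
  by (auto intro!: linearI simp: matrix_add_ldistrib matrix_add_rdistrib' matrix_scalar_ac scalar_matrix_assoc)

lemma bounded_bilinear_matrix_mult: "bounded_bilinear (\<lambda>(A::real^'n^'m) (B::real^'p^'n). A ** B)"
  using bilinear_matrix_mult bilinear_conv_bounded_bilinear by blast

section \<open>Finite smoothness\<close>

definition vd :: "(real \<Rightarrow> 'a::real_normed_vector) \<Rightarrow> real \<Rightarrow> 'a" where
  "vd f = (\<lambda>t. vector_derivative f (at t))"

fun Cn :: "nat \<Rightarrow> real set \<Rightarrow> (real \<Rightarrow> 'a::real_normed_vector) \<Rightarrow> bool" where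
  "Cn 0 S f = True"
| "Cn (Suc n) S f = ((\<forall>t\<in>S. (f has_vector_derivative vd f t) (at t)) \<and> Cn n S (vd f))"

lemma vderiv_n_Suc_vd: "vderiv_n (Suc n) f = vd (vderiv_n n f)"
  by (simp add: vd_def)

lemma smooth_on_Cn: "smooth_on S f \<longleftrightarrow> (\<forall>n. Cn n S f)"
proof
  assume sm: "smooth_on S f"
  have "Cn n S (vderiv_n m f)" for n m
  proof (induction n arbitrary: m)
    case 0 then show ?case by simp
  next
    case (Suc n)
    have "\<forall>t\<in>S. (vderiv_n m f has_vector_derivative vd (vderiv_n m f) t) (at t)"
      using sm unfolding smooth_on_def by (metis vderiv_n_Suc_vd)
    moreover have "Cn n S (vd (vderiv_n m f))"
      using Suc[of "Suc m"] by (simp only: vderiv_n_Suc_vd)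
    ultimately show ?case by simp
  qed
  from this[of _ 0] show "\<forall>n. Cn n S f" by simp
next
  assume H: "\<forall>n. Cn n S f"
  have "Cn n S (vderiv_n m f)" for n m
  proof (induction m arbitrary: n)
    case 0 then show ?case using H by simp
  next
    case (Suc m)
    from Suc[of "Suc n"] show ?case by (simp only: vderiv_n_Suc_vd Cn.simps)
  qed
  then show "smooth_on S f"
    unfolding smooth_on_def
    by (metis Cn.simps(2) vderiv_n_Suc_vd)
qed

lemma Cn_mono: "Cn (Suc n) S f \<Longrightarrow> Cn n S f"
  by (induction n arbitrary: f) auto

lemma Cn_le: "Cn n S f \<Longrightarrow> m \<le> n \<Longrightarrow> Cn m S f"
proof (induction n)
  case 0 then show ?case by simp
next
  case (Suc n) then show ?case using Cn_mono le_Suc_eq by metis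
qed

lemma vd_eq:
  assumes "open S" "\<forall>t\<in>S. f t = g t" "t \<in> S"
  shows "vd f t = vd g t"
proof -
  have "(f has_vector_derivative D) (at t) \<longleftrightarrow> (g has_vector_derivative D) (at t)" for D
    using has_vector_derivative_transform_within_open[of f D t S g]
      has_vector_derivative_transform_within_open[of g D t S f] assms by auto
  then show ?thesis by (simp add: vd_def vector_derivative_def)
qed

lemma Cn_cong:
  assumes "open S" "\<forall>t\<in>S. f t = g t" "Cn n S f"
  shows "Cn n S g"
  using assms
proof (induction n arbitrary: f g)
  case 0 then show ?case by simp
next
  case (Suc n)
  have eq: "\<forall>t\<in>S. vd f t = vd g t" using vd_eq Suc.prems by blast
  have "\<forall>t\<in>S. (g has_vector_derivative vd g t) (at t)"
  proof
    fix t assume t: "t \<in> S"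
    have "(f has_vector_derivative vd f t) (at t)" using Suc.prems t by simp
    then have "(g has_vector_derivative vd f t) (at t)"
      using has_vector_derivative_transform_within_open[of f "vd f t" t S g] Suc.prems t by auto
    then show "(g has_vector_derivative vd g t) (at t)" using eq t by simp
  qed
  moreover have "Cn n S (vd g)" using Suc.IH[of "vd f" "vd g"] Suc.prems eq by simp
  ultimately show ?case by simp
qed

lemma vd_at: "(f has_vector_derivative f') (at t) \<Longrightarrow> vd f t = f'"
  by (simp add: vd_def vector_derivative_at)

lemma Cn_SucI:
  assumes "open S" "\<And>t. t \<in> S \<Longrightarrow> (f has_vector_derivative f' t) (at t)" "Cn n S f'"
  shows "Cn (Suc n) S f"
proof -
  have e: "\<forall>t\<in>S. f' t = vd f t" using assms(2) vd_at by metis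
  have "Cn n S (vd f)" using Cn_cong[OF assms(1) e assms(3)] .
  then show ?thesis using assms(2) e by simp
qed

lemma Cn_const: "open S \<Longrightarrow> Cn n S (\<lambda>t. c)"
proof (induction n arbitrary: c)
  case 0 then show ?case by simp
next
  case (Suc n)
  show ?case by (rule Cn_SucI[OF Suc.prems, where f'="\<lambda>t. 0"]) (simp_all add: Suc.IH[OF Suc.prems])
qed

lemma Cn_add:
  assumes "open S" "Cn n S f" "Cn n S g"
  shows "Cn n S (\<lambda>t. f t + g t)"
  using assms(2,3)
proof (induction n arbitrary: f g)
  case 0 then show ?case by simp
next
  case (Suc n)
  show ?case
  proof (rule Cn_SucI[OF assms(1), where f'="\<lambda>t. vd f t + vd g t"])
    show "((\<lambda>t. f t + g t) has_vector_derivative vd f t + vd g t) (at t)" if "t \<in> S" for t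
      using Suc.prems that by (auto intro!: derivative_eq_intros)
    show "Cn n S (\<lambda>t. vd f t + vd g t)" using Suc by simp
  qed
qed

lemma Cn_linear:
  assumes L: "bounded_linear L" and "open S" "Cn n S f"
  shows "Cn n S (\<lambda>t. L (f t))"
  using assms(3)
proof (induction n arbitrary: f)
  case 0 then show ?case by simp
next
  case (Suc n)
  show ?case
  proof (rule Cn_SucI[OF assms(2), where f'="\<lambda>t. L (vd f t)"])
    show "((\<lambda>t. L (f t)) has_vector_derivative L (vd f t)) (at t)" if "t \<in> S" for t
      using Suc.prems that bounded_linear.has_vector_derivative[OF L] by auto
    show "Cn n S (\<lambda>t. L (vd f t))" using Suc by simp
  qed
qed

lemma Cn_bilinear:
  fixes prod :: "'a::real_normed_vector \<Rightarrow> 'b::real_normed_vector \<Rightarrow> 'c::real_normed_vector"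
    and f :: "real \<Rightarrow> 'a" and g :: "real \<Rightarrow> 'b"
  assumes B: "bounded_bilinear prod" and "open S" "Cn n S f" "Cn n S g"
  shows "Cn n S (\<lambda>t. prod (f t) (g t))"
  using assms(3,4)
proof (induction n arbitrary: f g)
  case 0 then show ?case by simp
next
  case (Suc n)
  show ?case
  proof (rule Cn_SucI[OF assms(2), where f'="\<lambda>t. prod (f t) (vd g t) + prod (vd f t) (g t)"])
    show "((\<lambda>t. prod (f t) (g t)) has_vector_derivative prod (f t) (vd g t) + prod (vd f t) (g t)) (at t)"
      if "t \<in> S" for t
      using Suc.prems that bounded_bilinear.has_vector_derivative[OF B] by auto
    have f: "Cn n S f" using Cn_mono Suc.prems(1) by blast
    have g: "Cn n S g" using Cn_mono Suc.prems(2) by blast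
    have vf: "Cn n S (vd f)" using Suc.prems(1) by simp
    have vg: "Cn n S (vd g)" using Suc.prems(2) by simp
    have "Cn n S (\<lambda>t. prod (f t) (vd g t))" using Suc.IH f vg by blast
    moreover have "Cn n S (\<lambda>t. prod (vd f t) (g t))" using Suc.IH vf g by blast
    ultimately show "Cn n S (\<lambda>t. prod (f t) (vd g t) + prod (vd f t) (g t))"
      using Cn_add assms(2) by blast
  qed
qed

lemma Cn_comp:
  fixes g f :: "real \<Rightarrow> real"
  assumes "open U" "open S" "\<forall>m. Cn m U g" "Cn n S f" "\<forall>t\<in>S. f t \<in> U"
  shows "Cn n S (\<lambda>t. g (f t))"
  using assms(3-5)
proof (induction n arbitrary: f g)
  case 0 then show ?case by simp
next
  case (Suc n)
  show ?case
  proof (rule Cn_SucI[OF assms(2), where f'="\<lambda>t. vd g (f t) * vd f t"])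
    show "((\<lambda>t. g (f t)) has_vector_derivative vd g (f t) * vd f t) (at t)" if "t \<in> S" for t
    proof -
      have "(g has_vector_derivative vd g (f t)) (at (f t))"
        using Suc.prems(1)[rule_format, of 1] Suc.prems(3) that by auto
      moreover have "(f has_vector_derivative vd f t) (at t)" using Suc.prems(2) that by auto
      ultimately show ?thesis
        unfolding has_real_derivative_iff_has_vector_derivative[symmetric]
        using DERIV_chain2 by blast
    qed
    have g': "\<forall>m. Cn m U (vd g)" using Suc.prems(1) by (metis Cn.simps(2))
    have "Cn n S (\<lambda>t. vd g (f t))" using Suc.IH[OF g'] Suc.prems Cn_mono by blast
    moreover have "Cn n S (vd f)" using Suc.prems by simp
    ultimately show "Cn n S (\<lambda>t. vd g (f t) * vd f t)"
      using Cn_bilinear[OF bounded_bilinear_mult assms(2)] by blast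
  qed
qed

lemma Cn_sin_cos: "Cn n UNIV sin \<and> Cn n UNIV cos"
proof (induction n)
  case 0 then show ?case by simp
next
  case (Suc n)
  have ds: "(sin has_vector_derivative cos t) (at t)" for t
    unfolding has_real_derivative_iff_has_vector_derivative[symmetric] by (rule DERIV_sin)
  have dc: "(cos has_vector_derivative - sin t) (at t)" for t
    unfolding has_real_derivative_iff_has_vector_derivative[symmetric] by (rule DERIV_cos)
  have "Cn n UNIV (\<lambda>t. - sin t)"
    using Cn_linear[OF bounded_linear_minus[OF bounded_linear_ident] open_UNIV] Suc by blast
  then have "Cn (Suc n) UNIV cos" using Cn_SucI[OF open_UNIV dc] by blast
  moreover have "Cn (Suc n) UNIV sin" using Cn_SucI[OF open_UNIV ds] Suc by blast
  ultimately show ?case by blast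
qed

lemma Cn_inverse: "Cn n {0<..} (inverse :: real \<Rightarrow> real)"
proof (induction n)
  case 0 then show ?case by simp
next
  case (Suc n)
  have d: "((inverse::real\<Rightarrow>real) has_vector_derivative - (inverse t * inverse t)) (at t)" if "t \<in> {0<..}" for t
    unfolding has_real_derivative_iff_has_vector_derivative[symmetric]
    using that DERIV_inverse[of t] by (simp add: power2_eq_square)
  have h: "Cn n {0<..} (\<lambda>t. inverse t * inverse (t::real))"
    using Cn_bilinear[OF bounded_bilinear_mult open_greaterThan Suc Suc] .
  have "Cn n {0<..} (\<lambda>t. - (inverse t * inverse (t::real)))"
    using Cn_linear[OF bounded_linear_minus[OF bounded_linear_ident] open_greaterThan h] .
  then show ?case using Cn_SucI[OF open_greaterThan d] by blast
qed

lemma Cn_sqrt: "Cn n {0<..} sqrt"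
proof (induction n)
  case 0 then show ?case by simp
next
  case (Suc n)
  have d: "(sqrt has_vector_derivative inverse (sqrt t) / 2) (at t)" if "t \<in> {0<..}" for t
    unfolding has_real_derivative_iff_has_vector_derivative[symmetric]
    using that DERIV_real_sqrt[of t] by simp
  have h: "Cn n {0<..} (\<lambda>t. inverse (sqrt t))"
    using Cn_comp[of "{0<..}" "{0<..}" inverse n sqrt] Suc Cn_inverse by auto
  have "Cn n {0<..} (\<lambda>t. inverse (sqrt t) / 2)"
    using Cn_linear[OF bounded_linear_divide[of "2::real"] open_greaterThan h] .
  then show ?case using Cn_SucI[OF open_greaterThan d] by blast
qed

lemma num4_neq: "(1::4) \<noteq> 2" "(1::4) \<noteq> 3" "(1::4) \<noteq> 4" "(2::4) \<noteq> 3" "(2::4) \<noteq> 4" "(3::4) \<noteq> 4"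
  "(2::4) \<noteq> 1" "(3::4) \<noteq> 1" "(4::4) \<noteq> 1" "(3::4) \<noteq> 2" "(4::4) \<noteq> 2" "(4::4) \<noteq> 3"
  by simp_all

lemma sm_Cn: "smooth_on S f \<Longrightarrow> Cn n S f"
  by (simp add: smooth_on_Cn)

lemma sm_vd: "smooth_on S f \<Longrightarrow> smooth_on S (vd f)"
  unfolding smooth_on_Cn by (metis Cn.simps(2))

lemma sm_deriv: "smooth_on S f \<Longrightarrow> t \<in> S \<Longrightarrow> (f has_vector_derivative vd f t) (at t)"
  unfolding smooth_on_Cn by (metis Cn.simps(2))

lemma sm_const: "open S \<Longrightarrow> smooth_on S (\<lambda>t. c)"
  by (simp add: smooth_on_Cn Cn_const)

lemma sm_add: "open S \<Longrightarrow> smooth_on S f \<Longrightarrow> smooth_on S g \<Longrightarrow> smooth_on S (\<lambda>t. f t + g t)"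
  by (simp add: smooth_on_Cn Cn_add)

lemma sm_linear: "bounded_linear L \<Longrightarrow> open S \<Longrightarrow> smooth_on S f \<Longrightarrow> smooth_on S (\<lambda>t. L (f t))"
  by (simp add: smooth_on_Cn Cn_linear)

lemma sm_bilinear:
  fixes prod :: "'a::real_normed_vector \<Rightarrow> 'b::real_normed_vector \<Rightarrow> 'c::real_normed_vector"
    and f :: "real \<Rightarrow> 'a" and g :: "real \<Rightarrow> 'b"
  shows "bounded_bilinear prod \<Longrightarrow> open S \<Longrightarrow> smooth_on S f \<Longrightarrow> smooth_on S g \<Longrightarrow>
    smooth_on S (\<lambda>t. prod (f t) (g t))"
  by (simp add: smooth_on_Cn Cn_bilinear)

lemma sm_comp:
  fixes g f :: "real \<Rightarrow> real"
  shows "open U \<Longrightarrow> open S \<Longrightarrow> smooth_on U g \<Longrightarrow> smooth_on S f \<Longrightarrow> \<forall>t\<in>S. f t \<in> U \<Longrightarrow>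
    smooth_on S (\<lambda>t. g (f t))"
  by (simp add: smooth_on_Cn Cn_comp)

lemma sm_mult:
  fixes f g :: "real \<Rightarrow> real"
  shows "open S \<Longrightarrow> smooth_on S f \<Longrightarrow> smooth_on S g \<Longrightarrow> smooth_on S (\<lambda>t. f t * g t)"
  using sm_bilinear[OF bounded_bilinear_mult] by blast

lemma sm_scaleR:
  fixes f :: "real \<Rightarrow> real" and g :: "real \<Rightarrow> 'a::real_normed_vector"
  shows "open S \<Longrightarrow> smooth_on S f \<Longrightarrow> smooth_on S g \<Longrightarrow> smooth_on S (\<lambda>t. f t *\<^sub>R g t)"
  using sm_bilinear[OF bounded_bilinear_scaleR] by blast

lemma sm_mmult:
  fixes f :: "real \<Rightarrow> real^'n^'m" and g :: "real \<Rightarrow> real^'p^'n"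
  shows "open S \<Longrightarrow> smooth_on S f \<Longrightarrow> smooth_on S g \<Longrightarrow> smooth_on S (\<lambda>t. f t ** g t)"
  using sm_bilinear[OF bounded_bilinear_matrix_mult] by blast

lemma sm_minus:
  fixes f :: "real \<Rightarrow> 'a::real_normed_vector"
  shows "open S \<Longrightarrow> smooth_on S f \<Longrightarrow> smooth_on S (\<lambda>t. - f t)"
  using sm_linear[OF bounded_linear_minus[OF bounded_linear_ident]] by blast

lemma sm_diff:
  fixes f :: "real \<Rightarrow> 'a::real_normed_vector"
  shows "open S \<Longrightarrow> smooth_on S f \<Longrightarrow> smooth_on S g \<Longrightarrow> smooth_on S (\<lambda>t. f t - g t)"
  using sm_add[of S f "\<lambda>t. - g t"] sm_minus[of S g] by simp

lemma sm_sin: "smooth_on UNIV sin" and sm_cos: "smooth_on UNIV cos"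
  using Cn_sin_cos by (auto simp: smooth_on_Cn)

lemma sm_inverse: "smooth_on {0<..} (inverse :: real \<Rightarrow> real)"
  using Cn_inverse by (auto simp: smooth_on_Cn)

lemma sm_sqrt: "smooth_on {0<..} sqrt"
  using Cn_sqrt by (auto simp: smooth_on_Cn)

lemma sm_cong: "open S \<Longrightarrow> \<forall>t\<in>S. f t = g t \<Longrightarrow> smooth_on S f \<Longrightarrow> smooth_on S g"
  using Cn_cong by (metis smooth_on_Cn)

lemma sm_SucI:
  assumes "open S" "\<And>t. t \<in> S \<Longrightarrow> (f has_vector_derivative f' t) (at t)" "smooth_on S f'"
  shows "smooth_on S f"
  using assms Cn_SucI Cn_mono unfolding smooth_on_Cn by metis

lemma bounded_linear_entry: "bounded_linear (\<lambda>M::real^'n^'m. M $ i $ j)"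
  unfolding linear_conv_bounded_linear[symmetric]
  by (rule linearI) simp_all

lemma sm_entry: "open S \<Longrightarrow> smooth_on S (f :: real \<Rightarrow> real^'n^'m) \<Longrightarrow> smooth_on S (\<lambda>t. f t $ i $ j)"
  using sm_linear[OF bounded_linear_entry] by blast

lemma bounded_linear_transpose: "bounded_linear (transpose :: real^'n^'m \<Rightarrow> real^'m^'n)"
  unfolding linear_conv_bounded_linear[symmetric]
  by (rule linearI) (simp_all add: transpose_def vec_eq_iff)

lemma sm_transpose: "open S \<Longrightarrow> smooth_on S (f :: real \<Rightarrow> real^'n^'m) \<Longrightarrow> smooth_on S (\<lambda>t. transpose (f t))"
  using sm_linear[OF bounded_linear_transpose] by blast

lemma smooth_continuous: "smooth_on S f \<Longrightarrow> continuous_on S f"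
  by (metis continuous_at_imp_continuous_on has_vector_derivative_continuous sm_deriv)

lemma transpose_add': "transpose ((A::real^'n^'m) + B) = transpose A + transpose B"
  by (simp add: transpose_def vec_eq_iff)

lemma transpose_uminus': "transpose (- (A::real^'n^'m)) = - transpose A"
  by (simp add: transpose_def vec_eq_iff)

lemma matrix_uminus_left: "(- (A::real^'n^'m)) ** B = - (A ** B)"
  by (simp add: matrix_matrix_mult_def vec_eq_iff sum_negf)

lemma matrix_uminus_right: "(A::real^'n^'m) ** (- B) = - (A ** B)"
  by (simp add: matrix_matrix_mult_def vec_eq_iff sum_negf)

lemma skew4_eq:
  fixes M :: "real^4^4"
  assumes "transpose M = - M"
  shows "M = skew4 (M$1$2) (M$1$3) (M$1$4) (M$2$3) (M$2$4) (M$3$4)"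
proof -
  have s: "M$i$j = - M$j$i" for i j
  proof -
    have "transpose M $ j $ i = (- M) $ j $ i" using assms by simp
    then show ?thesis by (simp add: transpose_def)
  qed
  have d: "M$i$i = 0" for i using s[of i i] by linarith
  show ?thesis
    unfolding vec_eq_iff skew4_def
    apply (intro allI)
    subgoal for i j
      using exhaust_4[of i] exhaust_4[of j] by (elim disjE) (simp_all add: d s[of 2 1] s[of 3 1] s[of 4 1] s[of 3 2] s[of 4 2] s[of 4 3])
    done
qed

section \<open>Frames\<close>

lemma sum_delta_mult: "(\<Sum>k\<in>UNIV. (if k = a then 1 else (0::real)) * f k) = f (a::'n::finite)"
proof -
  have "(\<Sum>k\<in>UNIV. (if k = a then 1 else (0::real)) * f k) = (\<Sum>k\<in>UNIV. if a = k then f k else 0)"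
    by (rule sum.cong) auto
  also have "\<dots> = f a" by (simp add: sum.delta)
  finally show ?thesis .
qed

lemma sum_delta_mult': "(\<Sum>k\<in>UNIV. f k * (if k = a then 1 else (0::real))) = f (a::'n::finite)"
proof -
  have "(\<Sum>k\<in>UNIV. f k * (if k = a then 1 else (0::real))) = (\<Sum>k\<in>UNIV. if a = k then f k else 0)"
    by (rule sum.cong) auto
  also have "\<dots> = f a" by (simp add: sum.delta)
  finally show ?thesis .
qed

lemma orth_right: "orthogonal_matrix (Q::real^'n^'n) \<Longrightarrow> Q ** transpose Q = mat 1"
  by (simp add: orthogonal_matrix_def)

lemma orth_left: "orthogonal_matrix (Q::real^'n^'n) \<Longrightarrow> transpose Q ** Q = mat 1"
  by (simp add: orthogonal_matrix_def)

lemma coeff_vd: "coeff_matrix Z t = vd Z t ** transpose (Z t)"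
  by (simp add: coeff_matrix_def vd_def)

lemma frame_smooth: "is_frame I \<gamma> Z \<Longrightarrow> smooth_on I Z"
  by (simp add: is_frame_def)

lemma sm_coeff: "open I \<Longrightarrow> smooth_on I Z \<Longrightarrow> smooth_on I (\<lambda>t. coeff_matrix Z t)"
  unfolding coeff_vd
  by (intro sm_mmult sm_vd sm_transpose) auto

lemma has_vd_mmult:
  fixes R :: "real \<Rightarrow> real^'n^'m" and Z :: "real \<Rightarrow> real^'p^'n"
  assumes "(R has_vector_derivative R') (at t)" "(Z has_vector_derivative Z') (at t)"
  shows "((\<lambda>s. R s ** Z s) has_vector_derivative (R t ** Z' + R' ** Z t)) (at t)"
  using bounded_bilinear.has_vector_derivative[OF bounded_bilinear_matrix_mult assms] by simp

lemma frame_coeff_skew: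
  assumes I: "open I" and Z: "is_frame I \<gamma> Z" and t: "t \<in> I"
  shows "transpose (coeff_matrix Z t) = - coeff_matrix Z t"
proof -
  have sZ: "smooth_on I Z" using Z by (simp add: is_frame_def)
  have dZ: "(Z has_vector_derivative vd Z t) (at t)" using sm_deriv[OF sZ t] .
  have dT: "((\<lambda>s. transpose (Z s)) has_vector_derivative transpose (vd Z t)) (at t)"
    using bounded_linear.has_vector_derivative[OF bounded_linear_transpose dZ] .
  have dP: "((\<lambda>s. Z s ** transpose (Z s)) has_vector_derivative
      (Z t ** transpose (vd Z t) + vd Z t ** transpose (Z t))) (at t)"
    using has_vd_mmult[OF dZ dT] .
  have c: "\<forall>s\<in>I. mat 1 = Z s ** transpose (Z s)"
  proof
    fix s assume "s \<in> I"
    then have "orthogonal_matrix (Z s)" using Z by (simp add: is_frame_def)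
    then show "mat 1 = Z s ** transpose (Z s)" using orth_right by metis
  qed
  have d0: "((\<lambda>s. Z s ** transpose (Z s)) has_vector_derivative 0) (at t)"
    using has_vector_derivative_transform_within_open[OF has_vector_derivative_const[of "mat 1" "at t"] I t c[rule_format]] .
  have "Z t ** transpose (vd Z t) + vd Z t ** transpose (Z t) = 0"
    using vector_derivative_unique_at[OF dP d0] .
  moreover have "transpose (vd Z t ** transpose (Z t)) = Z t ** transpose (vd Z t)"
    by (simp add: matrix_transpose_mul)
  ultimately show ?thesis unfolding coeff_vd by (simp add: eq_neg_iff_add_eq_0)
qed

lemma row1_mult:
  assumes "(R::real^4^4) $ 1 = axis 1 1" shows "(R ** (Z::real^4^4)) $ 1 = Z $ 1"
proof -
  have "R $ 1 $ k = (if k = 1 then 1 else 0)" for k using assms by (simp add: axis_def)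
  then show ?thesis unfolding matrix_matrix_mult_def by (simp add: vec_eq_iff sum_delta_mult)
qed

lemma frame_transform:
  assumes I: "open I" and Z: "is_frame I \<gamma> Z" and R: "smooth_on I R"
    and Ro: "\<forall>t\<in>I. orthogonal_matrix (R t)" and R1: "\<forall>t\<in>I. R t $ 1 = axis 1 1"
  shows "is_frame I \<gamma> (\<lambda>t. R t ** Z t)"
    and "\<forall>t\<in>I. coeff_matrix (\<lambda>t. R t ** Z t) t = (vd R t + R t ** coeff_matrix Z t) ** transpose (R t)"
proof -
  have sZ: "smooth_on I Z" using Z by (simp add: is_frame_def)
  show "is_frame I \<gamma> (\<lambda>t. R t ** Z t)"
    unfolding is_frame_def
  proof (intro conjI ballI)
    show "smooth_on I (\<lambda>t. R t ** Z t)" using sm_mmult[OF I R sZ] .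
    fix t assume t: "t \<in> I"
    show "orthogonal_matrix (R t ** Z t)"
      using Ro Z t orthogonal_matrix_mul by (auto simp: is_frame_def)
    show "(R t ** Z t) $ 1 = vector_derivative \<gamma> (at t)"
      using row1_mult[of "R t" "Z t"] R1 Z t by (auto simp: is_frame_def)
  qed
  show "\<forall>t\<in>I. coeff_matrix (\<lambda>t. R t ** Z t) t = (vd R t + R t ** coeff_matrix Z t) ** transpose (R t)"
  proof
    fix t assume t: "t \<in> I"
    have d: "((\<lambda>s. R s ** Z s) has_vector_derivative (R t ** vd Z t + vd R t ** Z t)) (at t)"
      using has_vd_mmult[OF sm_deriv[OF R t] sm_deriv[OF sZ t]] .
    have ZZ: "Z t ** transpose (Z t) = mat 1" using Z t orth_right by (auto simp: is_frame_def)
    have "coeff_matrix (\<lambda>t. R t ** Z t) t = (R t ** vd Z t + vd R t ** Z t) ** (transpose (Z t) ** transpose (R t))"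
      unfolding coeff_vd vd_at[OF d] by (simp add: matrix_transpose_mul)
    also have "\<dots> = R t ** (vd Z t ** transpose (Z t)) ** transpose (R t) + vd R t ** (Z t ** transpose (Z t)) ** transpose (R t)"
      by (simp add: matrix_add_rdistrib' matrix_mul_assoc)
    also have "\<dots> = (vd R t + R t ** coeff_matrix Z t) ** transpose (R t)"
      unfolding ZZ coeff_vd by (simp add: matrix_add_rdistrib')
    finally show "coeff_matrix (\<lambda>t. R t ** Z t) t = (vd R t + R t ** coeff_matrix Z t) ** transpose (R t)" .
  qed
qed

lemma frame_of_type_perm:
  assumes I: "open I" and F: "frame_of_type ty I \<gamma> Z"
  shows "\<exists>W x1 x2 x3. is_frame I \<gamma> W \<and> smooth_on I x1 \<and> smooth_on I x2 \<and> smooth_on I x3 \<and>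
    (\<forall>t\<in>I. coeff_matrix W t = type_form ty (x1 t) (x2 t) (x3 t))"
proof -
  obtain p x1 x2 x3 where p: "p permutes (UNIV :: 4 set)" "p 1 = 1" and sx: "smooth_on I x1"
    "smooth_on I x2" "smooth_on I x3" and c: "\<forall>t\<in>I. coeff_matrix (\<lambda>s. \<chi> i. Z s $ p i) t = type_form ty (x1 t) (x2 t) (x3 t)"
    and Z: "is_frame I \<gamma> Z"
    using F unfolding frame_of_type_def by blast
  define Pm :: "real^4^4" where "Pm = (\<chi> i j. if j = p i then 1 else 0)"
  have eq: "Pm ** M = (\<chi> i. M $ p i)" for M :: "real^4^4"
    unfolding Pm_def matrix_matrix_mult_def
    by (simp add: vec_eq_iff sum_delta_mult)
  have inj: "inj p" using p(1) permutes_inj by blast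
  have "Pm ** transpose Pm = mat 1"
    unfolding Pm_def matrix_matrix_mult_def transpose_def mat_def
    using inj by (simp add: vec_eq_iff sum_delta_mult inj_eq)
  then have Po: "orthogonal_matrix Pm"
    using matrix_left_right_inverse orthogonal_matrix_def by blast
  have P1: "Pm $ 1 = axis 1 1" unfolding Pm_def axis_def using p(2) by (simp add: vec_eq_iff)
  have "is_frame I \<gamma> (\<lambda>t. Pm ** Z t)"
    using frame_transform(1)[OF I Z sm_const[OF I] ] Po P1 by blast
  then have "is_frame I \<gamma> (\<lambda>s. \<chi> i. Z s $ p i)" using eq by simp
  then show ?thesis using sx c by blast
qed

lemma frame_of_typeI:
  assumes I: "open I" and W: "is_frame I \<gamma> W"
    and sx: "smooth_on I x1" "smooth_on I x2" "smooth_on I x3"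
    and c: "\<forall>t\<in>I. coeff_matrix W t = type_form ty (x1 t) (x2 t) (x3 t)"
  shows "frame_of_type ty I \<gamma> W"
  unfolding frame_of_type_def
  apply (rule conjI[OF W])
  apply (rule exI[of _ id], rule exI[of _ x1], rule exI[of _ x2], rule exI[of _ x3])
  using sx c by (auto simp: permutes_id)

lemma frame_coeff_skew4:
  assumes I: "open I" and W: "is_frame I \<gamma> W" and t: "t \<in> I"
  shows "coeff_matrix W t = skew4 (coeff_matrix W t $1$2) (coeff_matrix W t $1$3) (coeff_matrix W t $1$4)
     (coeff_matrix W t $2$3) (coeff_matrix W t $2$4) (coeff_matrix W t $3$4)"
  using skew4_eq[OF frame_coeff_skew[OF I W t]] .

lemma sm_coeff_entry: "open I \<Longrightarrow> is_frame I \<gamma> W \<Longrightarrow> smooth_on I (\<lambda>t. coeff_matrix W t $ i $ j)"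
  using sm_entry[OF _ sm_coeff[OF _ frame_smooth]] by blast

lemma typeB_I:
  assumes I: "open I" and W: "is_frame I \<gamma> W"
    and z: "\<forall>t\<in>I. coeff_matrix W t $2$3 = 0 \<and> coeff_matrix W t $2$4 = 0 \<and> coeff_matrix W t $3$4 = 0"
  shows "frame_of_type TypeB I \<gamma> W"
proof -
  have s1: "smooth_on I (\<lambda>t. coeff_matrix W t $1$2)" using sm_coeff_entry[OF I W] .
  have s2: "smooth_on I (\<lambda>t. coeff_matrix W t $1$3)" using sm_coeff_entry[OF I W] .
  have s3: "smooth_on I (\<lambda>t. coeff_matrix W t $1$4)" using sm_coeff_entry[OF I W] .
  show ?thesis
    apply (rule frame_of_typeI[OF I W s1 s2 s3])
    using frame_coeff_skew4[OF I W] z by simp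
qed

lemma typeC_I:
  assumes I: "open I" and W: "is_frame I \<gamma> W"
    and z: "\<forall>t\<in>I. coeff_matrix W t $1$4 = 0 \<and> coeff_matrix W t $2$3 = 0 \<and> coeff_matrix W t $3$4 = 0"
  shows "frame_of_type TypeC I \<gamma> W"
proof -
  have s1: "smooth_on I (\<lambda>t. coeff_matrix W t $1$2)" using sm_coeff_entry[OF I W] .
  have s2: "smooth_on I (\<lambda>t. coeff_matrix W t $1$3)" using sm_coeff_entry[OF I W] .
  have s3: "smooth_on I (\<lambda>t. coeff_matrix W t $2$4)" using sm_coeff_entry[OF I W] .
  show ?thesis
    apply (rule frame_of_typeI[OF I W s1 s2 s3])
    using frame_coeff_skew4[OF I W] z by simp
qed

lemma typeD_I:
  assumes I: "open I" and W: "is_frame I \<gamma> W"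
    and z: "\<forall>t\<in>I. coeff_matrix W t $1$3 = 0 \<and> coeff_matrix W t $1$4 = 0 \<and> coeff_matrix W t $3$4 = 0"
  shows "frame_of_type TypeD I \<gamma> W"
proof -
  have s1: "smooth_on I (\<lambda>t. coeff_matrix W t $1$2)" using sm_coeff_entry[OF I W] .
  have s2: "smooth_on I (\<lambda>t. coeff_matrix W t $2$3)" using sm_coeff_entry[OF I W] .
  have s3: "smooth_on I (\<lambda>t. coeff_matrix W t $2$4)" using sm_coeff_entry[OF I W] .
  show ?thesis
    apply (rule frame_of_typeI[OF I W s1 s2 s3])
    using frame_coeff_skew4[OF I W] z by simp
qed

definition oint :: "real \<Rightarrow> real \<Rightarrow> (real \<Rightarrow> 'a::banach) \<Rightarrow> 'a" where
  "oint a b f = (if a \<le> b then integral {a..b} f else - integral {b..a} f)"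

lemma oint_same [simp]: "oint t t f = 0"
  by (simp add: oint_def)

lemma interval_around:
  fixes I :: "real set" and t0 t :: real
  assumes I: "is_interval I" "open I" and t0: "t0 \<in> I" and t: "t \<in> I"
  obtains a b where "a < t0" "a < t" "t0 < b" "t < b" "{a..b} \<subseteq> I"
proof -
  obtain e1 where e1: "e1 > 0" "ball t0 e1 \<subseteq> I" using I(2) t0 open_contains_ball by blast
  obtain e2 where e2: "e2 > 0" "ball t e2 \<subseteq> I" using I(2) t open_contains_ball by blast
  define e where "e = min e1 e2"
  have e: "e > 0" "e \<le> e1" "e \<le> e2" using e1 e2 by (auto simp: e_def)
  define a where "a = min t0 t - e/2"
  define b where "b = max t0 t + e/2"
  have aI: "a \<in> I"
  proof (cases "t0 \<le> t")
    case True
    then have "a \<in> ball t0 e1" using e by (simp add: a_def dist_real_def)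
    then show ?thesis using e1 by blast
  next
    case False
    then have "a \<in> ball t e2" using e by (simp add: a_def dist_real_def)
    then show ?thesis using e2 by blast
  qed
  have bI: "b \<in> I"
  proof (cases "t0 \<le> t")
    case True
    then have "b \<in> ball t e2" using e by (simp add: b_def dist_real_def)
    then show ?thesis using e2 by blast
  next
    case False
    then have "b \<in> ball t0 e1" using e by (simp add: b_def dist_real_def)
    then show ?thesis using e1 by blast
  qed
  have iv: "\<forall>a\<in>I. \<forall>b\<in>I. \<forall>x. a \<le> x \<and> x \<le> b \<longrightarrow> x \<in> I" using I(1) is_interval_1 by blast
  have "{a..b} \<subseteq> I" by (intro subsetI) (meson iv aI bI atLeastAtMost_iff)
  moreover have "a < t0" "a < t" "t0 < b" "t < b" using e by (auto simp: a_def b_def)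
  ultimately show ?thesis using that by blast
qed

lemma oint_deriv:
  fixes f :: "real \<Rightarrow> 'a::banach"
  assumes I: "is_interval I" "open I" and t0: "t0 \<in> I" and t: "t \<in> I" and f: "continuous_on I f"
  shows "((\<lambda>s. oint t0 s f) has_vector_derivative f t) (at t)"
proof -
  obtain a b where ab: "a < t0" "a < t" "t0 < b" "t < b" "{a..b} \<subseteq> I"
    using interval_around[OF I t0 t] .
  have fc: "continuous_on {a..b} f" using f ab(5) continuous_on_subset by blast
  have fi: "f integrable_on {a..b}" using integrable_continuous_interval[OF fc] .
  have eq: "oint t0 s f = integral {a..s} f - integral {a..t0} f" if s: "s \<in> {a<..<b}" for s
  proof (cases "t0 \<le> s")
    case True
    have "integral {a..t0} f + integral {t0..s} f = integral {a..s} f"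
      by (rule Henstock_Kurzweil_Integration.integral_combine) (use True ab s in \<open>auto intro: integrable_on_subinterval[OF fi]\<close>)
    then show ?thesis using True by (simp add: oint_def algebra_simps)
  next
    case False
    have "integral {a..s} f + integral {s..t0} f = integral {a..t0} f"
      by (rule Henstock_Kurzweil_Integration.integral_combine) (use False ab s in \<open>auto intro: integrable_on_subinterval[OF fi]\<close>)
    then show ?thesis using False by (simp add: oint_def algebra_simps)
  qed
  have d1: "((\<lambda>u. integral {a..u} f) has_vector_derivative f t) (at t within {a..b})"
    using integral_has_vector_derivative[OF fc] ab by auto
  have "t \<in> interior {a..b}" using ab by simp
  then have d2: "((\<lambda>u. integral {a..u} f) has_vector_derivative f t) (at t)"
    using d1 at_within_interior by metis
  have d3: "((\<lambda>u. integral {a..u} f - integral {a..t0} f) has_vector_derivative f t) (at t)"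
    using has_vector_derivative_diff[OF d2 has_vector_derivative_const] by simp
  show ?thesis
    apply (rule has_vector_derivative_transform_within_open[OF d3, of "{a<..<b}"])
    using ab eq by auto
qed

primrec picard :: "real \<Rightarrow> (real \<Rightarrow> real^'n^'n) \<Rightarrow> nat \<Rightarrow> real \<Rightarrow> real^'n^'n" where
  "picard t0 A 0 = (\<lambda>t. mat 1)"
| "picard t0 A (Suc k) = (\<lambda>t. oint t0 t (\<lambda>s. picard t0 A k s ** A s))"

lemma picard_deriv_step:
  fixes A :: "real \<Rightarrow> real^'n^'n"
  assumes I: "is_interval I" "open I" and t0: "t0 \<in> I" and A: "continuous_on I A"
    and c: "continuous_on I (picard t0 A k)"
  shows "\<forall>t\<in>I. (picard t0 A (Suc k) has_vector_derivative picard t0 A k t ** A t) (at t)"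
proof -
  have c2: "continuous_on I (\<lambda>s. picard t0 A k s ** A s)"
    using bounded_bilinear.continuous_on[OF bounded_bilinear_matrix_mult c A] .
  have "\<forall>t\<in>I. ((\<lambda>t. oint t0 t (\<lambda>s. picard t0 A k s ** A s)) has_vector_derivative picard t0 A k t ** A t) (at t)"
    using oint_deriv[OF I t0 _ c2] by blast
  then show ?thesis by (simp only: picard.simps(2))
qed

lemma picard_cont:
  fixes A :: "real \<Rightarrow> real^'n^'n"
  assumes I: "is_interval I" "open I" and t0: "t0 \<in> I" and A: "continuous_on I A"
  shows "continuous_on I (picard t0 A k)"
proof (induction k)
  case 0 then show ?case by simp
next
  case (Suc k)
  then show ?case
    using picard_deriv_step[OF I t0 A Suc] has_vector_derivative_continuous continuous_at_imp_continuous_on by blast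
qed

lemma picard_deriv:
  fixes A :: "real \<Rightarrow> real^'n^'n"
  assumes I: "is_interval I" "open I" and t0: "t0 \<in> I" and A: "continuous_on I A" and t: "t \<in> I"
  shows "(picard t0 A (Suc k) has_vector_derivative picard t0 A k t ** A t) (at t)"
  using picard_deriv_step[OF I t0 A picard_cont[OF I t0 A]] t by blast

lemma pow_pred_helper: "real k * (y::real)^(k - Suc 0) * y = real k * y^k"
  by (cases k) auto

lemma matrix_uminus_left': "(- (A::real^'n^'m)) ** B = - (A ** B)"
  by (simp add: matrix_matrix_mult_def vec_eq_iff sum_negf)

lemma matrix_diff_rdistrib': "((A::real^'n^'m) - B) ** C = A ** C - B ** C"
  by (simp add: matrix_matrix_mult_def vec_eq_iff sum_subtractf left_diff_distrib)

lemma matrix_sum_left: "(sum f S) ** (B::real^'p^'n) = sum (\<lambda>i. (f i :: real^'n^'m) ** B) S"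
proof (cases "finite S")
  case True
  then show ?thesis by (induction S rule: finite_induct) (simp_all add: matrix_add_rdistrib')
next
  case False then show ?thesis by simp
qed

lemma ftc_pow_right:
  fixes C t0 :: real
  assumes "t0 \<le> t"
  shows "((\<lambda>s. C * (s - t0)^k) has_integral (C * (t - t0)^Suc k / real (Suc k))) {t0..t}"
proof -
  have "((\<lambda>s. C * (s - t0)^Suc k / real (Suc k)) has_vector_derivative C * (x - t0)^k) (at x within {t0..t})" for x
    unfolding has_real_derivative_iff_has_vector_derivative[symmetric]
    apply (auto intro!: derivative_eq_intros simp del: of_nat_Suc)
    apply (simp add: pow_pred_helper)
    apply (simp add: field_simps)
    done
  from fundamental_theorem_of_calculus[OF assms this] show ?thesis by simp
qed

lemma ftc_pow_left:
  fixes C t0 :: real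
  assumes "t \<le> t0"
  shows "((\<lambda>s. C * (t0 - s)^k) has_integral (C * (t0 - t)^Suc k / real (Suc k))) {t..t0}"
proof -
  have "((\<lambda>s. - (C * (t0 - s)^Suc k / real (Suc k))) has_vector_derivative C * (t0 - x)^k) (at x within {t..t0})" for x
    unfolding has_real_derivative_iff_has_vector_derivative[symmetric]
    apply (auto intro!: derivative_eq_intros simp del: of_nat_Suc)
    apply (simp add: pow_pred_helper)
    apply (simp add: field_simps)
    done
  from fundamental_theorem_of_calculus[OF assms this] show ?thesis by simp
qed

lemma picard_bound:
  fixes A :: "real \<Rightarrow> real^'n^'n"
  assumes I: "is_interval I" "open I" and t0: "t0 \<in> I" and A: "continuous_on I A"
    and ab: "{a..b} \<subseteq> I" "a \<le> t0" "t0 \<le> b"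
    and M: "\<forall>s\<in>{a..b}. norm (A s) \<le> M"
    and K: "\<forall>X::real^'n^'n. \<forall>Y::real^'n^'n. norm (X ** Y) \<le> norm X * norm Y * K" "K \<ge> 0"
  shows "\<forall>t\<in>{a..b}. norm (picard t0 A k t) \<le> norm (mat 1::real^'n^'n) * (K*M)^k * \<bar>t - t0\<bar>^k / fact k"
proof (induction k)
  case 0 show ?case by simp
next
  case (Suc k)
  define c where "c = norm (mat 1::real^'n^'n) * (K*M)^k / fact k"
  have M0: "M \<ge> 0" using M ab by (meson atLeastAtMost_iff norm_ge_zero order_trans)
  have c0: "c \<ge> 0" using M0 K by (simp add: c_def)
  have bnd: "norm (picard t0 A k s ** A s) \<le> c*K*M * \<bar>s - t0\<bar>^k" if s: "s \<in> {a..b}" for s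
  proof -
    have h1: "norm (picard t0 A k s) \<le> c * \<bar>s - t0\<bar>^k" using Suc s by (simp add: c_def)
    have h2: "norm (A s) \<le> M" using M s by blast
    have "norm (picard t0 A k s ** A s) \<le> norm (picard t0 A k s) * norm (A s) * K" by (rule K(1)[rule_format])
    also have "\<dots> \<le> (c * \<bar>s - t0\<bar>^k) * M * K"
      by (intro mult_right_mono mult_mono h1 h2) (use c0 K in auto)
    finally show ?thesis by (simp add: ac_simps)
  qed
  have cont: "continuous_on I (\<lambda>s. picard t0 A k s ** A s)"
    using bounded_bilinear.continuous_on[OF bounded_bilinear_matrix_mult picard_cont[OF I t0 A] A] .
  have fs: "fact (Suc k) = real (Suc k) * fact k" by simp
  show ?case
  proof
    fix t assume t: "t \<in> {a..b}"
    show "norm (picard t0 A (Suc k) t) \<le> norm (mat 1::real^'n^'n) * (K*M)^Suc k * \<bar>t - t0\<bar>^Suc k / fact (Suc k)"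
    proof (cases "t0 \<le> t")
      case True
      have sub: "{t0..t} \<subseteq> I" using t ab by auto
      have int1: "(\<lambda>s. picard t0 A k s ** A s) integrable_on {t0..t}"
        using integrable_continuous_interval[OF continuous_on_subset[OF cont sub]] .
      have hi: "((\<lambda>s. c*K*M * (s - t0)^k) has_integral (c*K*M * (t - t0)^Suc k / real (Suc k))) {t0..t}"
        using ftc_pow_right[OF True] .
      have "norm (integral {t0..t} (\<lambda>s. picard t0 A k s ** A s)) \<le> integral {t0..t} (\<lambda>s. c*K*M * (s - t0)^k)"
      proof (rule integral_norm_bound_integral[OF int1])
        show "(\<lambda>s. c*K*M * (s - t0)^k) integrable_on {t0..t}" using hi by blast
        fix s assume s: "s \<in> {t0..t}"
        then have "s \<in> {a..b}" using t ab by auto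
        moreover have "\<bar>s - t0\<bar> = s - t0" using s by simp
        ultimately show "norm (picard t0 A k s ** A s) \<le> c*K*M * (s - t0)^k" using bnd[of s] by simp
      qed
      also have "\<dots> = c*K*M * (t - t0)^Suc k / real (Suc k)" using hi by blast
      finally show ?thesis using True by (simp add: oint_def c_def fs field_simps)
    next
      case False
      then have F: "t \<le> t0" by simp
      have sub: "{t..t0} \<subseteq> I" using t ab by auto
      have int1: "(\<lambda>s. picard t0 A k s ** A s) integrable_on {t..t0}"
        using integrable_continuous_interval[OF continuous_on_subset[OF cont sub]] .
      have hi: "((\<lambda>s. c*K*M * (t0 - s)^k) has_integral (c*K*M * (t0 - t)^Suc k / real (Suc k))) {t..t0}"
        using ftc_pow_left[OF F] .
      have "norm (integral {t..t0} (\<lambda>s. picard t0 A k s ** A s)) \<le> integral {t..t0} (\<lambda>s. c*K*M * (t0 - s)^k)"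
      proof (rule integral_norm_bound_integral[OF int1])
        show "(\<lambda>s. c*K*M * (t0 - s)^k) integrable_on {t..t0}" using hi by blast
        fix s assume s: "s \<in> {t..t0}"
        then have "s \<in> {a..b}" using t ab by auto
        moreover have "\<bar>s - t0\<bar> = t0 - s" using s by simp
        ultimately show "norm (picard t0 A k s ** A s) \<le> c*K*M * (t0 - s)^k" using bnd[of s] by simp
      qed
      also have "\<dots> = c*K*M * (t0 - t)^Suc k / real (Suc k)" using hi by blast
      finally show ?thesis using False by (simp add: oint_def c_def fs field_simps abs_minus_commute)
    qed
  qed
qed

lemma linear_ode_exists:
  fixes A :: "real \<Rightarrow> real^'n^'n"
  assumes I: "is_interval I" "open I" and t0: "t0 \<in> I" and A: "continuous_on I A"
  shows "\<exists>R. R t0 = mat 1 \<and> (\<forall>t\<in>I. (R has_vector_derivative R t ** A t) (at t))"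
proof -
  define P where "P = picard t0 A"
  define R where "R t = mat 1 + (\<Sum>n. P (Suc n) t)" for t
  obtain K where K: "K > 0" "\<forall>X::real^'n^'n. \<forall>Y::real^'n^'n. norm (X ** Y) \<le> norm X * norm Y * K"
    using bounded_bilinear.pos_bounded[OF bounded_bilinear_matrix_mult] by auto
  have P0: "P (Suc n) t0 = 0" for n by (simp add: P_def)
  have R0: "R t0 = mat 1" by (simp add: R_def P0)
  have "(R has_vector_derivative R t ** A t) (at t)" if t: "t \<in> I" for t
  proof -
    obtain a b where ab: "a < t0" "a < t" "t0 < b" "t < b" "{a..b} \<subseteq> I"
      using interval_around[OF I t0 t] .
    have "compact (A ` {a..b})"
      using compact_continuous_image[OF continuous_on_subset[OF A ab(5)]] by simp
    then have "bounded (A ` {a..b})" by (rule compact_imp_bounded)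
    then obtain M where M: "M > 0" "\<forall>s\<in>{a..b}. norm (A s) \<le> M"
      unfolding bounded_pos by auto
    define L where "L = b - a"
    define C where "C = norm (mat 1::real^'n^'n)"
    define B where "B n = C * (inverse (fact n) * (K*M*L)^n)" for n
    have Bs: "summable B" unfolding B_def by (intro summable_mult summable_exp)
    have Pb: "norm (P n s) \<le> B n" if s: "s \<in> {a..b}" for n s
    proof -
      have "norm (P n s) \<le> C * (K*M)^n * \<bar>s - t0\<bar>^n / fact n"
      proof -
        have "\<forall>t\<in>{a..b}. norm (picard t0 A n t) \<le> norm (mat 1::real^'n^'n) * (K*M)^n * \<bar>t - t0\<bar>^n / fact n"
          using picard_bound[OF I t0 A ab(5) _ _ M(2) K(2) less_imp_le[OF K(1)]] ab by auto
        then show ?thesis using s by (simp add: P_def C_def)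
      qed
      also have "\<dots> \<le> C * (K*M)^n * L^n / fact n"
      proof -
        have "\<bar>s - t0\<bar> \<le> L" using s ab by (auto simp: L_def abs_le_iff)
        then have "\<bar>s - t0\<bar>^n \<le> L^n" by (intro power_mono) auto
        moreover have "C * (K*M)^n \<ge> 0" using K M by (simp add: C_def)
        ultimately show ?thesis by (intro divide_right_mono mult_left_mono) auto
      qed
      also have "\<dots> = B n" by (simp add: B_def power_mult_distrib field_simps)
      finally show ?thesis .
    qed
    have unif: "uniform_limit {a..b} (\<lambda>n s. \<Sum>i<n. P i s) (\<lambda>s. \<Sum>i. P i s) sequentially"
      by (rule Weierstrass_m_test[OF Pb Bs])
    have summ: "summable (\<lambda>n. P n s)" if s: "s \<in> {a..b}" for s
      using summable_comparison_test'[OF Bs Pb[OF s]] .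
    have Rs: "R s = (\<Sum>n. P n s)" if s: "s \<in> {a..b}" for s
      using suminf_split_head[OF summ[OF s]] by (simp add: R_def P_def)
    define g' where "g' x = (\<lambda>h. h *\<^sub>R ((\<Sum>i. P i x) ** A x))" for x
    have ser: "\<exists>g. \<forall>x\<in>{a..b}. (\<lambda>n. P (Suc n) x) sums (g x) \<and> (g has_derivative g' x) (at x within {a..b})"
    proof (rule has_derivative_series[where f'="\<lambda>n x h. h *\<^sub>R (P n x ** A x)"])
      show "convex {a..b}" by simp
      show "t0 \<in> {a..b}" using ab by simp
      show "(\<lambda>n. P (Suc n) t0) sums 0" by (simp add: P0)
      fix n x assume x: "x \<in> {a..b}"
      then have "x \<in> I" using ab by auto
      then have "(P (Suc n) has_vector_derivative P n x ** A x) (at x)"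
        using picard_deriv[OF I t0 A] by (simp add: P_def)
      then show "(P (Suc n) has_derivative (\<lambda>h. h *\<^sub>R (P n x ** A x))) (at x within {a..b})"
        unfolding has_vector_derivative_def by (rule has_derivative_at_withinI)
    next
      fix e :: real assume e: "e > 0"
      have "\<forall>\<^sub>F n in sequentially. \<forall>x\<in>{a..b}. dist (\<Sum>i<n. P i x) (\<Sum>i. P i x) < e / (K*M)"
        using uniform_limitD[OF unif] e K M by simp
      then show "\<forall>\<^sub>F n in sequentially. \<forall>x\<in>{a..b}. \<forall>h. norm ((\<Sum>i<n. h *\<^sub>R (P i x ** A x)) - g' x h) \<le> e * norm h"
      proof (rule eventually_mono)
        fix n assume H: "\<forall>x\<in>{a..b}. dist (\<Sum>i<n. P i x) (\<Sum>i. P i x) < e / (K*M)"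
        show "\<forall>x\<in>{a..b}. \<forall>h. norm ((\<Sum>i<n. h *\<^sub>R (P i x ** A x)) - g' x h) \<le> e * norm h"
        proof (intro ballI allI)
          fix x h assume x: "x \<in> {a..b}"
          have eq: "(\<Sum>i<n. h *\<^sub>R (P i x ** A x)) - g' x h = h *\<^sub>R (((\<Sum>i<n. P i x) - (\<Sum>i. P i x)) ** A x)"
            unfolding g'_def
            by (simp only: matrix_diff_rdistrib' matrix_sum_left scaleR_sum_right scaleR_diff_right)
          have "norm (((\<Sum>i<n. P i x) - (\<Sum>i. P i x)) ** A x) \<le> norm ((\<Sum>i<n. P i x) - (\<Sum>i. P i x)) * norm (A x) * K"
            using K(2) by blast
          also have "\<dots> \<le> (e / (K*M)) * M * K"
            using H x M K e by (intro mult_right_mono mult_mono) (auto simp: dist_norm less_imp_le)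
          also have "\<dots> = e" using K M by simp
          finally show "norm ((\<Sum>i<n. h *\<^sub>R (P i x ** A x)) - g' x h) \<le> e * norm h"
            unfolding eq by (simp add: mult.commute[of _ "\<bar>h\<bar>"] mult_left_mono)
        qed
      qed
    qed
    then obtain g where g: "\<forall>x\<in>{a..b}. (\<lambda>n. P (Suc n) x) sums (g x) \<and> (g has_derivative g' x) (at x within {a..b})"
      by blast
    have gR: "R x = mat 1 + g x" if x: "x \<in> {a..b}" for x
      using g x sums_unique by (fastforce simp: R_def)
    have tab: "t \<in> {a..b}" using ab by simp
    have "((\<lambda>x. mat 1 + g x) has_derivative g' t) (at t within {a..b})"
      using has_derivative_add[OF has_derivative_const g[rule_format, OF tab, THEN conjunct2]] by simp
    then have "(R has_derivative g' t) (at t within {a..b})"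
      by (rule has_derivative_transform[OF tab, rotated]) (simp add: gR)
    moreover have "t \<in> interior {a..b}" using ab by simp
    ultimately have "(R has_derivative g' t) (at t)" using at_within_interior by metis
    then show ?thesis unfolding has_vector_derivative_def g'_def using Rs[OF tab] by simp
  qed
  then show ?thesis using R0 by blast
qed

lemma mat4_eqI:
  fixes A B :: "real^4^4"
  assumes "A$1$1 = B$1$1" "A$1$2 = B$1$2" "A$1$3 = B$1$3" "A$1$4 = B$1$4"
    "A$2$1 = B$2$1" "A$2$2 = B$2$2" "A$2$3 = B$2$3" "A$2$4 = B$2$4"
    "A$3$1 = B$3$1" "A$3$2 = B$3$2" "A$3$3 = B$3$3" "A$3$4 = B$3$4"
    "A$4$1 = B$4$1" "A$4$2 = B$4$2" "A$4$3 = B$4$3" "A$4$4 = B$4$4"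
  shows "A = B"
  unfolding vec_eq_iff
proof (intro allI)
  fix i j :: 4
  show "A$i$j = B$i$j"
    using exhaust_4[of i] exhaust_4[of j] assms by (elim disjE) simp_all
qed

lemma mm4: "((A::real^4^4) ** B) $ i $ j = A$i$1 * B$1$j + A$i$2 * B$2$j + A$i$3 * B$3$j + A$i$4 * B$4$j"
  by (simp add: matrix_matrix_mult_def sum_4)

lemma tr4: "transpose (A::real^4^4) $ i $ j = A $ j $ i"
  by (simp add: transpose_def)

definition Pn :: "real^4^4" where "Pn = (\<chi> i j. if i = j \<and> i \<noteq> 1 then 1 else 0)"
definition E11 :: "real^4^4" where "E11 = (\<chi> i j. if i = 1 \<and> j = 1 then 1 else 0)"

lemma Pn_entry: "Pn $ i $ j = (if i = j \<and> i \<noteq> 1 then 1 else 0)" by (simp add: Pn_def)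
lemma E11_entry: "E11 $ i $ j = (if i = 1 \<and> j = 1 then 1 else 0)" by (simp add: E11_def)
lemma mat1_entry: "(mat 1 :: real^4^4) $ i $ j = (if i = j then 1 else 0)" by (simp add: mat_def)

lemma PnPn: "(M::real^4^4) ** Pn ** Pn = M ** Pn"
  by (rule mat4_eqI) (simp_all add: mm4 Pn_entry)

lemma PnPn0: "Pn ** Pn = Pn"
  by (rule mat4_eqI) (simp_all add: mm4 Pn_entry)

lemma E11Pn: "E11 ** Pn = 0"
  by (rule mat4_eqI) (simp_all add: mm4 Pn_entry E11_entry)

lemma Pn_tr: "transpose Pn = Pn"
  by (rule mat4_eqI) (simp_all add: tr4 Pn_entry)

lemma E11_Pn: "E11 + Pn = mat 1"
  by (rule mat4_eqI) (simp_all add: Pn_entry E11_entry mat1_entry)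

lemma Pn_row1: "(Pn ** M ** Pn) $ 1 $ j = 0"
  by (simp add: mm4 Pn_entry)

lemma Pn_col1: "(Pn ** M ** Pn) $ i $ 1 = 0"
  by (simp add: mm4 Pn_entry)

lemma Pn_inner: "i \<noteq> 1 \<Longrightarrow> j \<noteq> 1 \<Longrightarrow> (Pn ** M ** Pn) $ i $ j = M $ i $ j"
  using exhaust_4[of i] exhaust_4[of j] by (elim disjE) (simp_all add: mm4 Pn_entry)

lemma sandwich_zero:
  fixes R Y :: "real^4^4"
  assumes R: "\<And>k. k \<noteq> 1 \<Longrightarrow> R$k$1 = 0" and Y: "\<And>k l. k \<noteq> 1 \<Longrightarrow> l \<noteq> 1 \<Longrightarrow> Y$k$l = 0"
    and ij: "i \<noteq> 1" "j \<noteq> 1"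
  shows "(R ** Y ** transpose R) $ i $ j = 0"
  using R[OF ij(1)] R[OF ij(2)] Y[of 2 2] Y[of 2 3] Y[of 2 4] Y[of 3 2] Y[of 3 3] Y[of 3 4] Y[of 4 2] Y[of 4 3] Y[of 4 4]
  by (simp add: mm4 tr4)

lemma coeff_row1_nonzero:
  assumes I: "open I" and W: "is_frame I \<gamma> W" and reg: "two_regular I \<gamma>" and t: "t \<in> I"
  shows "coeff_matrix W t $ 1 \<noteq> 0"
proof
  assume H: "coeff_matrix W t $ 1 = 0"
  have sW: "smooth_on I W" using W by (simp add: is_frame_def)
  have "((\<lambda>s. W s $ 1) has_vector_derivative vd W t $ 1) (at t)"
    using bounded_linear.has_vector_derivative[OF bounded_linear_vec_nth sm_deriv[OF sW t]] .
  then have e1: "vd (\<lambda>s. W s $ 1) t = vd W t $ 1" by (rule vd_at)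
  have e2: "vd (\<lambda>s. W s $ 1) t = vd (\<lambda>s. vector_derivative \<gamma> (at s)) t"
    by (rule vd_eq[OF I _ t]) (use W in \<open>simp add: is_frame_def\<close>)
  have e3: "vderiv_n 2 \<gamma> t = vd (\<lambda>s. vector_derivative \<gamma> (at s)) t"
    by (simp add: numeral_2_eq_2 vd_def)
  have WW: "transpose (W t) ** W t = mat 1" using W t by (simp add: is_frame_def orth_left)
  have "coeff_matrix W t ** W t = vd W t"
    unfolding coeff_vd by (simp add: matrix_mul_assoc[symmetric] WW)
  then have "vd W t $ 1 = (coeff_matrix W t ** W t) $ 1" by simp
  also have "\<dots> = 0" using H by (simp add: vec_eq_iff matrix_matrix_mult_def)
  finally have "vderiv_n 2 \<gamma> t = 0" using e1 e2 e3 by simp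
  then show False using reg t by (simp add: two_regular_def)
qed

section \<open>Type B\<close>

lemma sm_ode:
  fixes A :: "real \<Rightarrow> real^4^4"
  assumes I: "open I" and sA: "smooth_on I A" and d: "\<forall>t\<in>I. (R has_vector_derivative R t ** A t) (at t)"
  shows "smooth_on I R"
  unfolding smooth_on_Cn
proof
  fix n show "Cn n I R"
  proof (induction n)
    case 0 then show ?case by simp
  next
    case (Suc n)
    have "Cn n I (\<lambda>t. R t ** A t)"
      using Cn_bilinear[OF bounded_bilinear_matrix_mult I Suc sm_Cn[OF sA]] .
    then show ?case using Cn_SucI[OF I, of R "\<lambda>t. R t ** A t"] d by blast
  qed
qed

lemma typeB_exists:
  assumes I: "is_interval I" "open I" "t0 \<in> I" and W: "is_frame I \<gamma> W"
  shows "\<exists>W'. is_frame I \<gamma> W' \<and> (\<forall>t\<in>I. coeff_matrix W' t $2$3 = 0 \<and> coeff_matrix W' t $2$4 = 0 \<and> coeff_matrix W' t $3$4 = 0)"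
proof -
  define X where "X t = coeff_matrix W t" for t
  have sX: "smooth_on I X" unfolding X_def using sm_coeff[OF I(2) frame_smooth[OF W]] .
  define A where "A t = - (Pn ** X t ** Pn)" for t
  have sA: "smooth_on I A" unfolding A_def
    by (intro sm_minus sm_mmult sm_const sX I(2))
  obtain R0 where R0: "R0 t0 = mat 1" "\<forall>t\<in>I. (R0 has_vector_derivative R0 t ** A t) (at t)"
    using linear_ode_exists[OF I(1,2,3) smooth_continuous[OF sA]] by blast
  have sR0: "smooth_on I R0" using sm_ode[OF I(2) sA R0(2)] .
  define R where "R t = E11 + Pn ** R0 t ** Pn" for t
  have sR: "smooth_on I R" unfolding R_def by (intro sm_add sm_mmult sm_const sR0 I(2))
  have key: "Pn ** (R0 t ** A t) ** Pn = R t ** A t" for t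
    by (simp add: A_def R_def matrix_add_rdistrib' matrix_uminus_right matrix_uminus_left matrix_mul_assoc PnPn E11Pn)
  have dR: "(R has_vector_derivative R t ** A t) (at t)" if t: "t \<in> I" for t
  proof -
    have "((\<lambda>s. Pn ** R0 s ** Pn) has_vector_derivative Pn ** (R0 t ** A t) ** Pn) (at t)"
      using has_vd_mmult[OF has_vd_mmult[OF has_vector_derivative_const R0(2)[rule_format, OF t]] has_vector_derivative_const]
      by simp
    then have "(R has_vector_derivative Pn ** (R0 t ** A t) ** Pn) (at t)"
      unfolding R_def using has_vector_derivative_add[OF has_vector_derivative_const] by fastforce
    then show ?thesis using key by simp
  qed
  have skX: "transpose (X t) = - X t" if "t \<in> I" for t
    unfolding X_def using frame_coeff_skew[OF I(2) W that] .
  have skA: "transpose (A t) + A t = 0" if "t \<in> I" for t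
    using skX[OF that] by (simp add: A_def matrix_transpose_mul Pn_tr transpose_uminus' matrix_uminus_right matrix_uminus_left matrix_mul_assoc)
  have Rt0: "R t0 = mat 1" by (simp add: R_def R0 E11_Pn PnPn0)
  have dG: "((\<lambda>s. R s ** transpose (R s)) has_derivative (\<lambda>h. 0)) (at t within I)" if t: "t \<in> I" for t
  proof -
    have dT: "((\<lambda>s. transpose (R s)) has_vector_derivative transpose (R t ** A t)) (at t)"
      using bounded_linear.has_vector_derivative[OF bounded_linear_transpose dR[OF t]] .
    have "((\<lambda>s. R s ** transpose (R s)) has_vector_derivative
        (R t ** transpose (R t ** A t) + (R t ** A t) ** transpose (R t))) (at t)"
      using has_vd_mmult[OF dR[OF t] dT] .
    moreover have "R t ** transpose (R t ** A t) + (R t ** A t) ** transpose (R t) = 0"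
    proof -
      have "R t ** transpose (R t ** A t) + (R t ** A t) ** transpose (R t)
          = R t ** (transpose (A t) + A t) ** transpose (R t)"
        by (simp add: matrix_transpose_mul matrix_add_ldistrib matrix_add_rdistrib' matrix_mul_assoc)
      then show ?thesis using skA[OF t] by simp
    qed
    ultimately have "((\<lambda>s. R s ** transpose (R s)) has_vector_derivative 0) (at t)" by simp
    then show ?thesis unfolding has_vector_derivative_def by (simp add: has_derivative_at_withinI)
  qed
  obtain G where G: "\<forall>x\<in>I. R x ** transpose (R x) = G"
    using has_derivative_zero_constant[OF is_interval_convex[OF I(1)] dG] by blast
  have RRt: "R x ** transpose (R x) = mat 1" if "x \<in> I" for x
    using G that I(3) Rt0 by force
  have Ro: "\<forall>t\<in>I. orthogonal_matrix (R t)"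
    using RRt matrix_left_right_inverse by (auto simp: orthogonal_matrix_def)
  have R1: "\<forall>t\<in>I. R t $ 1 = axis 1 1"
    by (auto simp: R_def vec_eq_iff axis_def E11_entry Pn_row1)
  have Rc: "R t $ k $ 1 = 0" if "k \<noteq> 1" for t k
    using that by (simp add: R_def E11_entry Pn_col1)
  define W' where "W' t = R t ** W t" for t
  have W': "is_frame I \<gamma> W'" unfolding W'_def using frame_transform(1)[OF I(2) W sR Ro R1] .
  have cW': "coeff_matrix W' t = R t ** (A t + X t) ** transpose (R t)" if t: "t \<in> I" for t
  proof -
    have "coeff_matrix W' t = (vd R t + R t ** X t) ** transpose (R t)"
      using frame_transform(2)[OF I(2) W sR Ro R1] t unfolding W'_def X_def by (metis (no_types) ext)
    also have "vd R t = R t ** A t" using vd_at[OF dR[OF t]] .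
    finally show ?thesis by (simp add: matrix_add_ldistrib)
  qed
  have Y: "(A t + X t) $ k $ l = 0" if "k \<noteq> 1" "l \<noteq> 1" for t k l
    using that by (simp add: A_def Pn_inner)
  have "\<forall>t\<in>I. coeff_matrix W' t $2$3 = 0 \<and> coeff_matrix W' t $2$4 = 0 \<and> coeff_matrix W' t $3$4 = 0"
    using sandwich_zero[OF Rc Y] cW' by simp
  then show ?thesis using W' by blast
qed

section \<open>Plane rotations\<close>

definition rotm :: "4 \<Rightarrow> 4 \<Rightarrow> real \<Rightarrow> real \<Rightarrow> real^4^4" where
  "rotm p q c s = (\<chi> i j. if i = p \<and> j = p then c else if i = p \<and> j = q then s else
     if i = q \<and> j = p then - s else if i = q \<and> j = q then c else if i = j \<and> i \<noteq> p \<and> i \<noteq> q then 1 else 0)"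

definition drotm :: "4 \<Rightarrow> 4 \<Rightarrow> real \<Rightarrow> real \<Rightarrow> real^4^4" where
  "drotm p q c s = (\<chi> i j. if i = p \<and> j = p then c else if i = p \<and> j = q then s else
     if i = q \<and> j = p then - s else if i = q \<and> j = q then c else 0)"

definition idpq :: "4 \<Rightarrow> 4 \<Rightarrow> real^4^4" where
  "idpq p q = (\<chi> i j. if i = j \<and> i \<noteq> p \<and> i \<noteq> q then 1 else 0)"
definition dr1 :: "4 \<Rightarrow> 4 \<Rightarrow> real^4^4" where
  "dr1 p q = (\<chi> i j. if i = p \<and> j = p then 1 else if i = q \<and> j = q then 1 else 0)"
definition dr2 :: "4 \<Rightarrow> 4 \<Rightarrow> real^4^4" where
  "dr2 p q = (\<chi> i j. if i = p \<and> j = q then 1 else if i = q \<and> j = p then -1 else 0)"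

lemma rotm_lin: "p \<noteq> q \<Longrightarrow> rotm p q c s = idpq p q + c *\<^sub>R dr1 p q + s *\<^sub>R dr2 p q"
  by (auto simp: vec_eq_iff rotm_def idpq_def dr1_def dr2_def)

lemma drotm_lin: "p \<noteq> q \<Longrightarrow> drotm p q c s = c *\<^sub>R dr1 p q + s *\<^sub>R dr2 p q"
  by (auto simp: vec_eq_iff drotm_def dr1_def dr2_def)

lemma rotm_deriv:
  assumes pq: "p \<noteq> q" and c: "(c has_real_derivative c') (at t)" and s: "(s has_real_derivative s') (at t)"
  shows "((\<lambda>t. rotm p q (c t) (s t)) has_vector_derivative drotm p q c' s') (at t)"
proof -
  have "((\<lambda>t. idpq p q + c t *\<^sub>R dr1 p q + s t *\<^sub>R dr2 p q) has_vector_derivative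
      0 + (c t *\<^sub>R 0 + c' *\<^sub>R dr1 p q) + (s t *\<^sub>R 0 + s' *\<^sub>R dr2 p q)) (at t)"
    by (intro has_vector_derivative_add has_vector_derivative_scaleR c s has_vector_derivative_const)
  then show ?thesis using rotm_lin[OF pq] drotm_lin[OF pq] by simp
qed

lemma sm_rotm:
  assumes pq: "p \<noteq> q" and S: "open S" and c: "smooth_on S c" and s: "smooth_on S s"
  shows "smooth_on S (\<lambda>t. rotm p q (c t) (s t))"
proof -
  have "smooth_on S (\<lambda>t. idpq p q + c t *\<^sub>R dr1 p q + s t *\<^sub>R dr2 p q)"
    by (intro sm_add sm_scaleR sm_const c s S)
  then show ?thesis using rotm_lin[OF pq] by simp
qed

lemma rotm34_orth: "c * c + s * s = 1 \<Longrightarrow> orthogonal_matrix (rotm 3 4 c s)"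
  unfolding orthogonal_matrix
  by (rule mat4_eqI) (simp_all add: mm4 tr4 rotm_def mat1_entry)

lemma rotm24_orth: "c * c + s * s = 1 \<Longrightarrow> orthogonal_matrix (rotm 2 4 c s)"
  unfolding orthogonal_matrix
  by (rule mat4_eqI) (simp_all add: mm4 tr4 rotm_def mat1_entry)

lemma rotm34_row1: "rotm 3 4 c s $ 1 = axis 1 1"
  unfolding vec_eq_iff axis_def rotm_def by auto

lemma rotm24_row1: "rotm 2 4 c s $ 1 = axis 1 1"
  unfolding vec_eq_iff axis_def rotm_def by auto

section \<open>Type D from type F\<close>

definition ND :: "real \<Rightarrow> real \<Rightarrow> real \<Rightarrow> real \<Rightarrow> real \<Rightarrow> real^4^4" where
  "ND a b x c s = (drotm 3 4 (- s * (- x)) (c * (- x)) + rotm 3 4 c s ** skew4 a 0 0 b 0 x) ** transpose (rotm 3 4 c s)"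

lemma D_entries:
  fixes a b x c s :: real
  assumes "c * c + s * s = 1"
  shows "ND a b x c s $1$3 = 0 \<and> ND a b x c s $1$4 = 0 \<and> ND a b x c s $3$4 = 0"
proof -
  have e: "x * (s * s) + x * (c * c) = x" using assms by (metis distrib_left mult.commute mult_1_right add.commute)
  show ?thesis using assms e unfolding ND_def by (simp add: mm4 tr4 rotm_def drotm_def skew4_def algebra_simps)
qed

lemma typeD_from_F:
  assumes I: "is_interval I" "open I" "t0 \<in> I" and W: "is_frame I \<gamma> W"
    and cF: "\<forall>t\<in>I. coeff_matrix W t $1$3 = 0 \<and> coeff_matrix W t $1$4 = 0 \<and> coeff_matrix W t $2$4 = 0"
  shows "\<exists>W'. is_frame I \<gamma> W' \<and> (\<forall>t\<in>I. coeff_matrix W' t $1$3 = 0 \<and> coeff_matrix W' t $1$4 = 0 \<and> coeff_matrix W' t $3$4 = 0)"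
proof -
  define X where "X t = coeff_matrix W t" for t
  define x where "x t = X t $3$4" for t
  have sx: "smooth_on I x" unfolding x_def X_def using sm_coeff_entry[OF I(2) W] .
  have smx: "smooth_on I (\<lambda>t. - x t)" using sm_minus[OF I(2) sx] .
  define th where "th t = oint t0 t (\<lambda>s. - x s)" for t
  have dth: "(th has_vector_derivative - x t) (at t)" if "t \<in> I" for t
    unfolding th_def using oint_deriv[OF I(1,2,3) that smooth_continuous[OF smx]] .
  have sth: "smooth_on I th" using sm_SucI[OF I(2) dth smx] .
  define R where "R t = rotm 3 4 (cos (th t)) (sin (th t))" for t
  have sR: "smooth_on I R" unfolding R_def
    by (intro sm_rotm sm_comp[OF open_UNIV I(2) sm_cos sth] sm_comp[OF open_UNIV I(2) sm_sin sth]) (auto simp: I(2))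
  have dR: "(R has_vector_derivative drotm 3 4 (- sin (th t) * (- x t)) (cos (th t) * (- x t))) (at t)"
    if t: "t \<in> I" for t
  proof -
    have d: "(th has_real_derivative - x t) (at t)"
      using dth[OF t] by (simp add: has_real_derivative_iff_has_vector_derivative)
    show ?thesis unfolding R_def
      by (rule rotm_deriv) (auto intro!: derivative_eq_intros d)
  qed
  have Ro: "\<forall>t\<in>I. orthogonal_matrix (R t)"
    unfolding R_def by (auto intro!: rotm34_orth simp: power2_eq_square[symmetric])
  have R1: "\<forall>t\<in>I. R t $ 1 = axis 1 1" unfolding R_def by (simp add: rotm34_row1)
  define W' where "W' t = R t ** W t" for t
  have W': "is_frame I \<gamma> W'" unfolding W'_def using frame_transform(1)[OF I(2) W sR Ro R1] .
  have "coeff_matrix W' t $1$3 = 0 \<and> coeff_matrix W' t $1$4 = 0 \<and> coeff_matrix W' t $3$4 = 0" if t: "t \<in> I" for t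
  proof -
    have c: "coeff_matrix W' t = (vd R t + R t ** X t) ** transpose (R t)"
      using frame_transform(2)[OF I(2) W sR Ro R1] t unfolding W'_def X_def by (metis (no_types) ext)
    have X: "X t = skew4 (X t $1$2) 0 0 (X t $2$3) 0 (x t)"
      using frame_coeff_skew4[OF I(2) W t] cF t unfolding X_def x_def by simp
    have cs: "cos (th t) * cos (th t) + sin (th t) * sin (th t) = 1"
      by (simp add: power2_eq_square[symmetric])
    have "coeff_matrix W' t = ND (X t $1$2) (X t $2$3) (x t) (cos (th t)) (sin (th t))"
      unfolding c vd_at[OF dR[OF t]] R_def ND_def by (subst X) (rule refl)
    then show ?thesis using D_entries[OF cs] by simp
  qed
  then show ?thesis using W' by blast
qed

section \<open>Type C\<close>

lemma generic_direction:
  fixes a :: "real \<Rightarrow> real^4"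
  assumes I: "open I" "t0 \<in> I" and sa: "smooth_on I a"
  shows "\<exists>c. c$1 = 0 \<and> norm c = 1 \<and> c \<noteq> axis 3 1 \<and> (\<forall>t\<in>I. \<forall>r. c \<noteq> r *\<^sub>R a t)"
proof -
  define f1 :: "real \<times> real \<times> real \<Rightarrow> real^4" where
    "f1 x = fst (snd x) *\<^sub>R a (fst x) + snd (snd x) *\<^sub>R axis 1 1" for x
  define f2 :: "real \<times> real \<Rightarrow> real^4" where
    "f2 x = fst x *\<^sub>R axis 3 1 + snd x *\<^sub>R axis 1 1" for x
  have bl1: "bounded_linear (\<lambda>x::real \<times> real \<times> real. fst (snd x))"
    using bounded_linear_compose[OF bounded_linear_fst bounded_linear_snd] by (simp add: o_def)
  have bl2: "bounded_linear (\<lambda>x::real \<times> real \<times> real. snd (snd x))"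
    using bounded_linear_compose[OF bounded_linear_snd bounded_linear_snd] by (simp add: o_def)
  have d1: "f1 differentiable_on (I \<times> UNIV)"
  proof (rule differentiable_at_imp_differentiable_on)
    fix x :: "real \<times> real \<times> real" assume x: "x \<in> I \<times> UNIV"
    have "a differentiable at (fst x)"
      using sm_deriv[OF sa] x differentiableI_vector by (metis mem_Times_iff)
    moreover have "fst differentiable at x"
      using bounded_linear_imp_differentiable[OF bounded_linear_fst] .
    ultimately have "(\<lambda>x. a (fst x)) differentiable at x" by (rule differentiable_compose)
    moreover have "(\<lambda>x::real \<times> real \<times> real. fst (snd x)) differentiable at x"
      using bounded_linear_imp_differentiable[OF bl1] .
    moreover have "(\<lambda>x::real \<times> real \<times> real. snd (snd x)) differentiable at x"
      using bounded_linear_imp_differentiable[OF bl2] .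
    ultimately show "f1 differentiable at x"
      unfolding f1_def by (intro differentiable_add differentiable_scaleR differentiable_const)
  qed
  have d2: "f2 differentiable_on UNIV"
  proof (rule differentiable_at_imp_differentiable_on)
    fix x :: "real \<times> real"
    have "fst differentiable at x" using bounded_linear_imp_differentiable[OF bounded_linear_fst] .
    moreover have "snd differentiable at x" using bounded_linear_imp_differentiable[OF bounded_linear_snd] .
    ultimately show "f2 differentiable at x"
      unfolding f2_def by (intro differentiable_add differentiable_scaleR differentiable_const)
  qed
  have n1: "negligible (f1 ` (I \<times> UNIV))"
    by (rule negligible_differentiable_image_lowdim[OF _ d1]) simp
  have n2: "negligible (f2 ` UNIV)"
    by (rule negligible_differentiable_image_lowdim[OF _ d2]) simp
  have "negligible (f1 ` (I \<times> UNIV) \<union> f2 ` UNIV)" using negligible_Un[OF n1 n2] .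
  then obtain v where v: "v \<notin> f1 ` (I \<times> UNIV)" "v \<notin> f2 ` UNIV"
    using non_negligible_UNIV by (metis UNIV_eq_I UnCI)
  define u where "u = v - (v$1) *\<^sub>R axis 1 1"
  have veq: "v = u + (v$1) *\<^sub>R axis 1 1" by (simp add: u_def)
  have u1: "u$1 = 0" by (simp add: u_def)
  have u0: "u \<noteq> 0"
  proof
    assume "u = 0"
    then have "v = f1 (t0, 0, v$1)" using veq by (simp add: f1_def)
    then show False using v(1) I(2) by blast
  qed
  define c where "c = u /\<^sub>R norm u"
  have c1: "c$1 = 0" by (simp add: c_def u1)
  have cn: "norm c = 1" using u0 by (simp add: c_def)
  have ue: "u = norm u *\<^sub>R c" using u0 by (simp add: c_def)
  have c3: "c \<noteq> axis 3 1"
  proof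
    assume "c = axis 3 1"
    then have "v = f2 (norm u, v$1)" using veq ue by (simp add: f2_def)
    then show False using v(2) by blast
  qed
  have cr: "\<forall>t\<in>I. \<forall>r. c \<noteq> r *\<^sub>R a t"
  proof (intro ballI allI notI)
    fix t r assume t: "t \<in> I" and h: "c = r *\<^sub>R a t"
    then have "v = f1 (t, norm u * r, v$1)" using veq ue by (simp add: f1_def)
    then show False using v(1) t by blast
  qed
  show ?thesis using c1 cn c3 cr by blast
qed

definition vv :: "real^4 \<Rightarrow> real^4^4" where "vv v = (\<chi> i j. v$i * v$j)"
definition hh :: "real^4 \<Rightarrow> real^4^4" where "hh v = mat 1 - (2 / (v \<bullet> v)) *\<^sub>R vv v"

lemma vv_sq: "vv v ** vv v = (v \<bullet> v) *\<^sub>R vv v"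
  by (simp add: vv_def matrix_matrix_mult_def vec_eq_iff inner_vec_def sum_distrib_left sum_distrib_right mult_ac)

lemma vv_tr: "transpose (vv v) = vv v"
  by (simp add: vv_def transpose_def vec_eq_iff mult.commute)

lemma vv_mv: "vv v *v x = (v \<bullet> x) *\<^sub>R v"
  by (simp add: vv_def matrix_vector_mult_def vec_eq_iff inner_vec_def sum_distrib_left mult_ac)

lemma matrix_diff_ldistrib': "(A::real^'n^'m) ** (B - C) = A ** B - A ** C"
  by (simp add: matrix_matrix_mult_def vec_eq_iff sum_subtractf right_diff_distrib)

lemma hh_tr: "transpose (hh v) = hh v"
  by (simp add: hh_def transpose_def vec_eq_iff vv_def mat_def mult.commute)

lemma hh_sq:
  assumes "v \<noteq> 0" shows "hh v ** hh v = mat 1"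
proof -
  define k where "k = 2 / (v \<bullet> v)"
  have vv0: "v \<bullet> v \<noteq> 0" using assms by simp
  have kk: "k * k * (v \<bullet> v) = 2 * k" using vv0 by (simp add: k_def field_simps)
  have "hh v ** hh v = mat 1 - k *\<^sub>R vv v - k *\<^sub>R vv v + (k * k) *\<^sub>R (vv v ** vv v)"
    unfolding hh_def k_def[symmetric]
    by (simp add: matrix_diff_ldistrib' matrix_diff_rdistrib' matrix_scalar_ac scalar_matrix_assoc[symmetric] algebra_simps)
  also have "\<dots> = mat 1 - k *\<^sub>R vv v - k *\<^sub>R vv v + (k * k * (v \<bullet> v)) *\<^sub>R vv v"
    by (simp add: vv_sq)
  also have "\<dots> = mat 1 - k *\<^sub>R vv v - k *\<^sub>R vv v + (k + k) *\<^sub>R vv v"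
    using kk by simp
  also have "\<dots> = mat 1" by (simp only: scaleR_add_left) simp
  finally show ?thesis .
qed

lemma hh_orth: "v \<noteq> 0 \<Longrightarrow> orthogonal_matrix (hh v)"
  by (simp add: orthogonal_matrix hh_tr hh_sq)

lemma hh_row1: "v$1 = 0 \<Longrightarrow> hh v $ 1 = axis 1 1"
  by (simp add: hh_def vec_eq_iff vv_def mat_def axis_def)

lemma hh_col1: "v$1 = 0 \<Longrightarrow> k \<noteq> 1 \<Longrightarrow> hh v $ k $ 1 = 0"
  by (simp add: hh_def vv_def mat_def)

lemma hh_mv: "hh v *v x = x - (2 / (v \<bullet> v) * (v \<bullet> x)) *\<^sub>R v"
  unfolding hh_def
  by (simp add: matrix_vector_mult_diff_rdistrib vv_mv scaleR_matrix_vector_assoc[symmetric])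

definition NC :: "real \<Rightarrow> real \<Rightarrow> real \<Rightarrow> real \<Rightarrow> real \<Rightarrow> real \<Rightarrow> real \<Rightarrow> real^4^4" where
  "NC d1 d3 al1 al3 b1 b2 b3 = (drotm 2 4 d1 d3 + rotm 2 4 al1 al3 ** skew4 b1 b2 b3 0 0 0) ** transpose (rotm 2 4 al1 al3)"

lemma C_entries:
  assumes "al1 * b3 = al3 * b1"
  shows "NC d1 d3 al1 al3 b1 b2 b3 $1$4 = 0 \<and> NC d1 d3 al1 al3 b1 b2 b3 $2$3 = 0 \<and> NC d1 d3 al1 al3 b1 b2 b3 $3$4 = 0"
  using assms unfolding NC_def by (simp add: mm4 tr4 rotm_def drotm_def skew4_def algebra_simps)

lemma row1_sandwich:
  fixes H M :: "real^4^4"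
  assumes "H $ 1 = axis 1 1"
  shows "(H ** M ** transpose H) $ 1 = H *v (M $ 1)"
proof -
  have r: "(H ** M) $ 1 = M $ 1" using row1_mult[OF assms] .
  show ?thesis
    by (simp add: vec_eq_iff mm4 tr4 r matrix_vector_mult_def sum_4 mult.commute)
qed

lemma skew4_B_entry: "k \<noteq> 1 \<Longrightarrow> l \<noteq> 1 \<Longrightarrow> skew4 a b c 0 0 0 $ k $ l = 0"
  using exhaust_4[of k] exhaust_4[of l] by (elim disjE) (simp_all add: skew4_def)

lemma typeC_from_B:
  assumes I: "is_interval I" "open I" "t0 \<in> I" and W: "is_frame I \<gamma> W" and reg: "two_regular I \<gamma>"
    and cB: "\<forall>t\<in>I. coeff_matrix W t $2$3 = 0 \<and> coeff_matrix W t $2$4 = 0 \<and> coeff_matrix W t $3$4 = 0"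
  shows "\<exists>W'. is_frame I \<gamma> W' \<and> (\<forall>t\<in>I. coeff_matrix W' t $1$4 = 0 \<and> coeff_matrix W' t $2$3 = 0 \<and> coeff_matrix W' t $3$4 = 0)"
proof -
  define X where "X t = coeff_matrix W t" for t
  have XB: "X t = skew4 (X t $1$2) (X t $1$3) (X t $1$4) 0 0 0" if "t \<in> I" for t
    using frame_coeff_skew4[OF I(2) W that] cB that unfolding X_def by simp
  define a where "a t = X t $ 1" for t
  have sa: "smooth_on I a"
    unfolding a_def X_def using sm_linear[OF bounded_linear_vec_nth I(2) sm_coeff[OF I(2) frame_smooth[OF W]]] .
  have a0: "a t \<noteq> 0" if "t \<in> I" for t
    unfolding a_def X_def using coeff_row1_nonzero[OF I(2) W reg that] .
  obtain c where c: "c$1 = 0" "norm c = 1" "c \<noteq> axis 3 1" "\<forall>t\<in>I. \<forall>r. c \<noteq> r *\<^sub>R a t"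
    using generic_direction[OF I(2,3) sa] by blast
  define v where "v = c - axis 3 1"
  have v0: "v \<noteq> 0" using c(3) by (simp add: v_def)
  have v1: "v$1 = 0" using c(1) by (simp add: v_def axis_def)
  define H where "H = hh v"
  have Ho: "orthogonal_matrix H" unfolding H_def using hh_orth[OF v0] .
  have H1: "H $ 1 = axis 1 1" unfolding H_def using hh_row1[OF v1] .
  have Hc: "H $ k $ 1 = 0" if "k \<noteq> 1" for k unfolding H_def using hh_col1[OF v1 that] .
  have HH: "H ** H = mat 1" unfolding H_def using hh_sq[OF v0] .
  have cc: "c \<bullet> c = 1" using c(2) by (simp add: dot_square_norm)
  have ve: "v \<bullet> axis 3 1 = c$3 - 1" by (simp add: v_def inner_diff_left inner_axis)
  have vv: "v \<bullet> v = 2 - 2 * c$3"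
    using cc by (simp add: v_def inner_diff_left inner_diff_right inner_axis inner_commute)
  have c3: "c$3 \<noteq> 1" using vv v0 by auto
  have He3: "H *v axis 3 1 = c"
  proof -
    have "2 / (v \<bullet> v) * (v \<bullet> axis 3 1) = -1" using c3 by (simp add: vv ve field_simps)
    then show ?thesis unfolding H_def hh_mv by (simp add: v_def)
  qed
  define W1 where "W1 t = H ** W t" for t
  have sH: "smooth_on I (\<lambda>t. H)" using sm_const[OF I(2)] .
  have W1: "is_frame I \<gamma> W1" unfolding W1_def using frame_transform(1)[OF I(2) W sH] Ho H1 by blast
  define X1 where "X1 t = coeff_matrix W1 t" for t
  have X1eq: "X1 t = H ** X t ** transpose H" if t: "t \<in> I" for t
  proof -
    have "X1 t = (vd (\<lambda>t. H) t + H ** X t) ** transpose H"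
      using frame_transform(2)[OF I(2) W sH] Ho H1 t unfolding X1_def W1_def X_def by blast
    moreover have "vd (\<lambda>t. H) t = 0" by (rule vd_at) simp
    ultimately show ?thesis by simp
  qed
  have X1B: "X1 t $ k $ l = 0" if t: "t \<in> I" and kl: "k \<noteq> 1" "l \<noteq> 1" for t k l
  proof -
    have "\<And>k l. k \<noteq> 1 \<Longrightarrow> l \<noteq> 1 \<Longrightarrow> X t $ k $ l = 0"
      using XB[OF t] skew4_B_entry by metis
    then show ?thesis using X1eq[OF t] sandwich_zero[OF Hc _ kl] by simp
  qed
  have X1S: "X1 t = skew4 (X1 t $1$2) (X1 t $1$3) (X1 t $1$4) 0 0 0" if t: "t \<in> I" for t
  proof -
    have "X1 t = skew4 (X1 t $1$2) (X1 t $1$3) (X1 t $1$4) (X1 t $2$3) (X1 t $2$4) (X1 t $3$4)"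
      unfolding X1_def using frame_coeff_skew4[OF I(2) W1 t] .
    then show ?thesis using X1B[OF t] by simp
  qed
  define b1 where "b1 t = X1 t $1$2" for t
  define b2 where "b2 t = X1 t $1$3" for t
  define b3 where "b3 t = X1 t $1$4" for t
  have nz: "b1 t * b1 t + b3 t * b3 t > 0" if t: "t \<in> I" for t
  proof (rule ccontr)
    assume "\<not> ?thesis"
    then have le: "b1 t * b1 t + b3 t * b3 t \<le> 0" by simp
    have "b1 t * b1 t \<ge> 0" "b3 t * b3 t \<ge> 0" by simp_all
    then have "b1 t * b1 t = 0" "b3 t * b3 t = 0" using le by linarith+
    then have z: "b1 t = 0" "b3 t = 0" by simp_all
    define a1 where "a1 = X1 t $ 1"
    have a1H: "a1 = H *v a t" unfolding a1_def a_def X1eq[OF t] using row1_sandwich[OF H1] .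
    have a1e: "a1 = (a1 $ 3) *\<^sub>R axis 3 1"
    proof -
      have "a1 $ 1 = 0" unfolding a1_def by (subst X1S[OF t]) (simp add: skew4_def)
      moreover have "a1 $ 2 = 0" "a1 $ 4 = 0" using z unfolding a1_def b1_def b3_def by auto
      ultimately show ?thesis
        unfolding vec_eq_iff
      proof (intro allI)
        fix i :: 4
        assume "a1 $ 1 = 0" "a1 $ 2 = 0" "a1 $ 4 = 0"
        then show "a1 $ i = (a1 $ 3 *\<^sub>R axis 3 1) $ i"
          using exhaust_4[of i] by (elim disjE) (simp_all add: axis_def)
      qed
    qed
    have "a t = H *v a1" using a1H HH by (simp add: matrix_vector_mul_assoc)
    also have "\<dots> = (a1 $ 3) *\<^sub>R c" by (subst a1e) (simp add: matrix_vector_mult_scaleR He3)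
    finally have at: "a t = (a1 $ 3) *\<^sub>R c" .
    then have "a1 $ 3 \<noteq> 0" using a0[OF t] by auto
    then have "c = (1 / (a1 $ 3)) *\<^sub>R a t" using at by simp
    then show False using c(4) t by blast
  qed
  have sb1: "smooth_on I b1" unfolding b1_def X1_def using sm_coeff_entry[OF I(2) W1] .
  have sb3: "smooth_on I b3" unfolding b3_def X1_def using sm_coeff_entry[OF I(2) W1] .
  define q where "q t = b1 t * b1 t + b3 t * b3 t" for t
  have sq: "smooth_on I q" unfolding q_def by (intro sm_add sm_mult sb1 sb3 I(2))
  define r where "r t = sqrt (q t)" for t
  have sr: "smooth_on I r" unfolding r_def
    by (rule sm_comp[OF open_greaterThan I(2) sm_sqrt sq]) (use nz in \<open>simp add: q_def\<close>)
  have rpos: "r t > 0" if "t \<in> I" for t using nz[OF that] by (simp add: r_def q_def)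
  define ir where "ir t = inverse (r t)" for t
  have sir: "smooth_on I ir" unfolding ir_def
    by (rule sm_comp[OF open_greaterThan I(2) sm_inverse sr]) (use rpos in simp)
  define al1 where "al1 t = b1 t * ir t" for t
  define al3 where "al3 t = b3 t * ir t" for t
  have sal1: "smooth_on I al1" unfolding al1_def by (intro sm_mult sb1 sir I(2))
  have sal3: "smooth_on I al3" unfolding al3_def by (intro sm_mult sb3 sir I(2))
  have alsq: "al1 t * al1 t + al3 t * al3 t = 1" if t: "t \<in> I" for t
  proof -
    have rr: "r t * r t = q t" using nz[OF t] by (simp add: r_def q_def)
    have q0: "q t \<noteq> 0" using nz[OF t] unfolding q_def by linarith
    have "al1 t * al1 t + al3 t * al3 t = q t * (ir t * ir t)"
      by (simp add: al1_def al3_def q_def algebra_simps)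
    also have "ir t * ir t = inverse (q t)" unfolding ir_def rr[symmetric] by (simp add: inverse_mult_distrib)
    finally show ?thesis using q0 by simp
  qed
  have alb: "al1 t * b3 t = al3 t * b1 t" for t by (simp add: al1_def al3_def)
  define R where "R t = rotm 2 4 (al1 t) (al3 t)" for t
  have sR: "smooth_on I R" unfolding R_def by (intro sm_rotm sal1 sal3 I(2)) simp
  have dR: "(R has_vector_derivative drotm 2 4 (vd al1 t) (vd al3 t)) (at t)" if t: "t \<in> I" for t
    unfolding R_def
    by (rule rotm_deriv) (use sm_deriv[OF sal1 t] sm_deriv[OF sal3 t] in \<open>auto simp: has_real_derivative_iff_has_vector_derivative\<close>)
  have Ro: "\<forall>t\<in>I. orthogonal_matrix (R t)" unfolding R_def using alsq rotm24_orth by blast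
  have R1: "\<forall>t\<in>I. R t $ 1 = axis 1 1" unfolding R_def by (simp add: rotm24_row1)
  define W2 where "W2 t = R t ** W1 t" for t
  have W2: "is_frame I \<gamma> W2" unfolding W2_def using frame_transform(1)[OF I(2) W1 sR Ro R1] .
  have "coeff_matrix W2 t $1$4 = 0 \<and> coeff_matrix W2 t $2$3 = 0 \<and> coeff_matrix W2 t $3$4 = 0" if t: "t \<in> I" for t
  proof -
    have "coeff_matrix W2 t = (vd R t + R t ** X1 t) ** transpose (R t)"
      using frame_transform(2)[OF I(2) W1 sR Ro R1] t unfolding W2_def X1_def by blast
    also have "\<dots> = NC (vd al1 t) (vd al3 t) (al1 t) (al3 t) (b1 t) (b2 t) (b3 t)"
      unfolding vd_at[OF dR[OF t]] NC_def R_def b1_def b2_def b3_def by (subst X1S[OF t]) (rule refl)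
    finally show ?thesis using C_entries[OF alb] by simp
  qed
  then show ?thesis using W2 by blast
qed

theorem corollary2:
  fixes I :: "real set" and \<gamma> :: "real \<Rightarrow> real^4"
  assumes "unit_speed_curve I \<gamma>" and "two_regular I \<gamma>"
  shows "(admits_frame_of_type TypeF I \<gamma> \<longrightarrow>
            admits_frame_of_type TypeB I \<gamma> \<and> admits_frame_of_type TypeC I \<gamma> \<and>
            admits_frame_of_type TypeD I \<gamma>)
       \<and> (admits_frenet_frame I \<gamma> \<longrightarrow>
            admits_frame_of_type TypeB I \<gamma> \<and> admits_frame_of_type TypeC I \<gamma> \<and>
            admits_frame_of_type TypeD I \<gamma>)"
proof -
  have oi: "open_interval I" using assms(1) by (simp add: unit_speed_curve_def)
  then have I1: "is_interval I" and I2: "open I" and Ine: "I \<noteq> {}" by (auto simp: open_interval_def)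
  then obtain t0 where t0: "t0 \<in> I" by blast
  have I: "is_interval I" "open I" "t0 \<in> I" using I1 I2 t0 by auto
  have main: "admits_frame_of_type TypeB I \<gamma> \<and> admits_frame_of_type TypeC I \<gamma> \<and>
            admits_frame_of_type TypeD I \<gamma>" if F: "admits_frame_of_type TypeF I \<gamma>"
  proof -
    obtain Z where Z: "frame_of_type TypeF I \<gamma> Z" using F by (auto simp: admits_frame_of_type_def)
    obtain W x1 x2 x3 where W: "is_frame I \<gamma> W"
      and cW: "\<forall>t\<in>I. coeff_matrix W t = type_form TypeF (x1 t) (x2 t) (x3 t)"
      using frame_of_type_perm[OF I2 Z] by blast
    have cF: "\<forall>t\<in>I. coeff_matrix W t $1$3 = 0 \<and> coeff_matrix W t $1$4 = 0 \<and> coeff_matrix W t $2$4 = 0"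
      using cW by (simp add: skew4_def)
    obtain WD where WD: "is_frame I \<gamma> WD"
      "\<forall>t\<in>I. coeff_matrix WD t $1$3 = 0 \<and> coeff_matrix WD t $1$4 = 0 \<and> coeff_matrix WD t $3$4 = 0"
      using typeD_from_F[OF I W cF] by blast
    obtain WB where WB: "is_frame I \<gamma> WB"
      "\<forall>t\<in>I. coeff_matrix WB t $2$3 = 0 \<and> coeff_matrix WB t $2$4 = 0 \<and> coeff_matrix WB t $3$4 = 0"
      using typeB_exists[OF I W] by blast
    obtain WC where WC: "is_frame I \<gamma> WC"
      "\<forall>t\<in>I. coeff_matrix WC t $1$4 = 0 \<and> coeff_matrix WC t $2$3 = 0 \<and> coeff_matrix WC t $3$4 = 0"
      using typeC_from_B[OF I WB(1) assms(2) WB(2)] by blast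
    show ?thesis
      unfolding admits_frame_of_type_def
      using typeB_I[OF I2 WB] typeC_I[OF I2 WC] typeD_I[OF I2 WD] by blast
  qed
  have fr: "admits_frame_of_type TypeF I \<gamma>" if Fr: "admits_frenet_frame I \<gamma>"
  proof -
    obtain Z x1 x2 x3 where Z: "is_frame I \<gamma> Z" "smooth_on I x1" "smooth_on I x2" "smooth_on I x3"
      "\<forall>t\<in>I. coeff_matrix Z t = type_form TypeF (x1 t) (x2 t) (x3 t)"
      using Fr unfolding admits_frenet_frame_def is_frenet_frame_def by blast
    show ?thesis unfolding admits_frame_of_type_def using frame_of_typeI[OF I2 Z] by blast
  qed
  show ?thesis using main fr by blast
qed

end
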